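(* Let $M\in\mathbb R^{\mathbb N\times\mathbb N}$ be bounded on $\ell_2$ and elliptic (there is $C_{\rm ell}>0$ with $Mx\cdot x\ge C_{\rm ell}\|x\|_{\ell_2}^2$), let $n_1=1<n_2<\cdots$ be a block structure, let $M(i,j)=0$ for $|i-j|>b_0$, and additionally $M\in\mathcal B(d,b_0)$ for a metric $d$ on $\mathbb N$. Let $M=LU$ be the block-$LU$-factorization with $L$ block-lower triangular, $U$ block-upper triangular, $L(i,i)=I$, and let $D$ be block-diagonal with $D(i,i)=U(i,i)$. Then for every $\varepsilon>0$ there exist $b\in\mathbb N$ and a block-upper triangular $U_\varepsilon^{-1}\in\mathcal B(d,b)$ with $U_\varepsilon^{-1}(i,j)=0$ for $|i-j|>b$ such that $\|U^{-1}-U_\varepsilon^{-1}\|_2\le\varepsilon$; $U_\varepsilon^{-1}$ is invertible with bounded inverse and $\sup_{\varepsilon>0}(\|U_\varepsilon\|_2+\|U_\varepsilon^{-1}\|_2)<\infty$. Moreover, there exists a block-diagonal $D_\varepsilon\in\mathcal B(d,b)$ which is bounded and elliptic with $\|D-D_\varepsilon\|_2\le\varepsilon$.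
   Context: $\|\cdot\|_2$ is the operator norm on $\ell_2$. $M\in\mathcal B(d,b)$ iff $M_{ij}=0$ whenever $d(i,j)>b$. Block notation: $M(i,j)=M|_{\{n_i,\dots,n_{i+1}-1\}\times\{n_j,\dots,n_{j+1}-1\}}$; block-upper triangular means $M(i,j)=0$ for $i>j$. *)

theory Defs
  imports "HOL-Analysis.Analysis"
begin

text \<open>Infinite real matrices indexed by the natural numbers (0-based), acting on ell_2.\<close>

type_synonym imat = "nat \<Rightarrow> nat \<Rightarrow> real"
type_synonym ivec = "nat \<Rightarrow> real"

definition l2 :: "ivec \<Rightarrow> bool" where
  "l2 x \<longleftrightarrow> summable (\<lambda>i. (x i)\<^sup>2)"

definition l2norm :: "ivec \<Rightarrow> real" where
  "l2norm x = sqrt (\<Sum>i. (x i)\<^sup>2)"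

definition l2inner :: "ivec \<Rightarrow> ivec \<Rightarrow> real" where
  "l2inner x y = (\<Sum>i. x i * y i)"

definition mv :: "imat \<Rightarrow> ivec \<Rightarrow> ivec" where
  "mv M x = (\<lambda>i. \<Sum>j. M i j * x j)"

definition mmul :: "imat \<Rightarrow> imat \<Rightarrow> imat" where
  "mmul A B = (\<lambda>i j. \<Sum>k. A i k * B k j)"

definition mdiff :: "imat \<Rightarrow> imat \<Rightarrow> imat" where
  "mdiff A B = (\<lambda>i j. A i j - B i j)"

definition bounded_l2 :: "imat \<Rightarrow> bool" where
  "bounded_l2 M \<longleftrightarrow>
     (\<forall>x. l2 x \<longrightarrow> (\<forall>i. summable (\<lambda>j. M i j * x j)) \<and> l2 (mv M x)) \<and>
     (\<exists>C. \<forall>x. l2 x \<longrightarrow> l2norm (mv M x) \<le> C * l2norm x)"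

definition opnorm2 :: "imat \<Rightarrow> real" where
  "opnorm2 M = Inf {C. 0 \<le> C \<and> (\<forall>x. l2 x \<longrightarrow> l2norm (mv M x) \<le> C * l2norm x)}"

definition elliptic :: "imat \<Rightarrow> bool" where
  "elliptic M \<longleftrightarrow> (\<exists>C>0. \<forall>x. l2 x \<longrightarrow> l2inner (mv M x) x \<ge> C * (l2norm x)\<^sup>2)"

definition is_bounded_inverse :: "imat \<Rightarrow> imat \<Rightarrow> bool" where
  "is_bounded_inverse A B \<longleftrightarrow> bounded_l2 A \<and> bounded_l2 B \<and>
     (\<forall>x. l2 x \<longrightarrow> mv A (mv B x) = x \<and> mv B (mv A x) = x)"

definition nat_metric :: "(nat \<Rightarrow> nat \<Rightarrow> real) \<Rightarrow> bool" where
  "nat_metric d \<longleftrightarrow> (\<forall>i j. d i j = 0 \<longleftrightarrow> i = j) \<and> (\<forall>i j. d i j = d j i) \<and>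
     (\<forall>i j k. d i k \<le> d i j + d j k)"

definition in_B :: "(nat \<Rightarrow> nat \<Rightarrow> real) \<Rightarrow> nat \<Rightarrow> imat \<Rightarrow> bool" where
  "in_B d b M \<longleftrightarrow> (\<forall>i j. d i j > real b \<longrightarrow> M i j = 0)"

definition block_structure :: "(nat \<Rightarrow> nat) \<Rightarrow> bool" where
  "block_structure n \<longleftrightarrow> n 0 = 0 \<and> strict_mono n"

definition blk :: "(nat \<Rightarrow> nat) \<Rightarrow> nat \<Rightarrow> nat set" where
  "blk n i = {n i ..< n (Suc i)}"

definition blk_zero :: "(nat \<Rightarrow> nat) \<Rightarrow> imat \<Rightarrow> nat \<Rightarrow> nat \<Rightarrow> bool" where
  "blk_zero n M i j \<longleftrightarrow> (\<forall>k\<in>blk n i. \<forall>l\<in>blk n j. M k l = 0)"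

definition blk_banded :: "(nat \<Rightarrow> nat) \<Rightarrow> nat \<Rightarrow> imat \<Rightarrow> bool" where
  "blk_banded n b M \<longleftrightarrow> (\<forall>i j. \<bar>int i - int j\<bar> > int b \<longrightarrow> blk_zero n M i j)"

definition blk_upper :: "(nat \<Rightarrow> nat) \<Rightarrow> imat \<Rightarrow> bool" where
  "blk_upper n M \<longleftrightarrow> (\<forall>i j. i > j \<longrightarrow> blk_zero n M i j)"

definition blk_lower :: "(nat \<Rightarrow> nat) \<Rightarrow> imat \<Rightarrow> bool" where
  "blk_lower n M \<longleftrightarrow> (\<forall>i j. i < j \<longrightarrow> blk_zero n M i j)"

definition blk_diagonal :: "(nat \<Rightarrow> nat) \<Rightarrow> imat \<Rightarrow> bool" where
  "blk_diagonal n M \<longleftrightarrow> (\<forall>i j. i \<noteq> j \<longrightarrow> blk_zero n M i j)"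

definition blk_unit_diag :: "(nat \<Rightarrow> nat) \<Rightarrow> imat \<Rightarrow> bool" where
  "blk_unit_diag n M \<longleftrightarrow> (\<forall>i. \<forall>k\<in>blk n i. \<forall>l\<in>blk n i. M k l = (if k = l then 1 else 0))"

definition blk_diag_part :: "(nat \<Rightarrow> nat) \<Rightarrow> imat \<Rightarrow> imat" where
  "blk_diag_part n U = (\<lambda>k l. if (\<exists>i. k \<in> blk n i \<and> l \<in> blk n i) then U k l else 0)"

end

theory Submission
  imports Defs "Jordan_Normal_Form.Determinant"
begin

definition fs :: "nat \<Rightarrow> ivec \<Rightarrow> bool" where
  "fs N x \<longleftrightarrow> (\<forall>i\<ge>N. x i = 0)"

definition restr :: "nat \<Rightarrow> ivec \<Rightarrow> ivec" where
  "restr N x = (\<lambda>i. if i < N then x i else 0)"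

lemma fs_restr[simp]: "fs N (restr N x)"
  by (simp add: fs_def restr_def)

lemma fs_mono: "fs N x \<Longrightarrow> N \<le> N' \<Longrightarrow> fs N' x"
  by (auto simp: fs_def)

lemma suminf_fs:
  fixes f :: "nat \<Rightarrow> real"
  assumes "\<And>i. i \<ge> N \<Longrightarrow> f i = 0"
  shows "suminf f = (\<Sum>i<N. f i)" "summable f"
proof -
  show "suminf f = (\<Sum>i<N. f i)"
    using suminf_finite[of "{..<N}" f] assms by auto
  show "summable f"
    by (rule summable_finite[of "{..<N}"]) (use assms in auto)
qed

lemma mv_fs: "fs N x \<Longrightarrow> mv T x i = (\<Sum>j<N. T i j * x j)"
  unfolding mv_def by (rule suminf_fs) (auto simp: fs_def)

lemma mv_fs_summable: "fs N x \<Longrightarrow> summable (\<lambda>j. T i j * x j)"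
  by (rule suminf_fs[of N]) (auto simp: fs_def)

lemma l2_fs: "fs N x \<Longrightarrow> l2 x"
  unfolding l2_def by (rule suminf_fs[of N]) (auto simp: fs_def)

lemma l2norm_fs: "fs N x \<Longrightarrow> l2norm x = L2_set x {..<N}"
  unfolding l2norm_def L2_set_def by (subst suminf_fs[of N]) (auto simp: fs_def)

lemma inner_fs: "fs N x \<Longrightarrow> l2inner y x = (\<Sum>i<N. y i * x i)"
  unfolding l2inner_def by (rule suminf_fs) (auto simp: fs_def)

lemma l2norm_nonneg: "l2 x \<Longrightarrow> 0 \<le> l2norm x"
  unfolding l2norm_def l2_def by (simp add: suminf_nonneg)

lemma l2norm_sq: "l2 x \<Longrightarrow> (l2norm x)\<^sup>2 = (\<Sum>i. (x i)\<^sup>2)"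
  unfolding l2norm_def l2_def by (simp add: suminf_nonneg)

lemma L2_set_le_l2norm: "l2 x \<Longrightarrow> L2_set x {..<N} \<le> l2norm x"
  unfolding l2norm_def l2_def L2_set_def
  by (rule real_sqrt_le_mono, rule sum_le_suminf) auto

lemma l2norm_restr: "l2 x \<Longrightarrow> l2norm (restr N x) \<le> l2norm x"
proof -
  assume "l2 x"
  have "l2norm (restr N x) = L2_set (restr N x) {..<N}" by (simp add: l2norm_fs)
  also have "\<dots> = L2_set x {..<N}" by (rule L2_set_cong) (auto simp: restr_def)
  also have "\<dots> \<le> l2norm x" using \<open>l2 x\<close> by (rule L2_set_le_l2norm)
  finally show ?thesis .
qed

lemma l2_zero_iff: "l2 x \<Longrightarrow> l2norm x = 0 \<Longrightarrow> x i = 0"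
  unfolding l2norm_def l2_def
  using suminf_eq_zero_iff[of "\<lambda>i. (x i)\<^sup>2"] by (simp add: suminf_nonneg)

lemma l2_mult_summable: "l2 x \<Longrightarrow> l2 y \<Longrightarrow> summable (\<lambda>i. x i * y i)"
proof -
  assume "l2 x" "l2 y"
  hence "summable (\<lambda>i. ((x i)\<^sup>2 + (y i)\<^sup>2) / 2)" unfolding l2_def
    by (intro summable_divide summable_add)
  moreover have "norm (x i * y i) \<le> ((x i)\<^sup>2 + (y i)\<^sup>2) / 2" for i
    using sum_squares_bound[of "\<bar>x i\<bar>" "\<bar>y i\<bar>"]
    by (simp add: abs_mult power2_eq_square)
  ultimately show ?thesis by (rule summable_comparison_test'[where N=0])
qed

lemma opnorm_set_ne:
  assumes "bounded_l2 M"
  shows "\<exists>C. C \<in> {C. 0 \<le> C \<and> (\<forall>x. l2 x \<longrightarrow> l2norm (mv M x) \<le> C * l2norm x)}"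
proof -
  from assms obtain C where C: "\<forall>x. l2 x \<longrightarrow> l2norm (mv M x) \<le> C * l2norm x"
    unfolding bounded_l2_def by blast
  have "\<forall>x. l2 x \<longrightarrow> l2norm (mv M x) \<le> max C 0 * l2norm x"
  proof (intro allI impI)
    fix x assume "l2 x"
    then have "C * l2norm x \<le> max C 0 * l2norm x"
      by (intro mult_right_mono) (auto simp: l2norm_nonneg)
    with C \<open>l2 x\<close> show "l2norm (mv M x) \<le> max C 0 * l2norm x" by force
  qed
  thus ?thesis by (intro exI[of _ "max C 0"]) auto
qed

lemma opnorm_nonneg: "bounded_l2 M \<Longrightarrow> 0 \<le> opnorm2 M"
  unfolding opnorm2_def
  by (rule cInf_greatest) (use opnorm_set_ne in auto)

lemma opnorm_le:
  assumes "0 \<le> C" "\<And>x. l2 x \<Longrightarrow> l2norm (mv M x) \<le> C * l2norm x"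
  shows "opnorm2 M \<le> C"
  unfolding opnorm2_def
  by (rule cInf_lower) (use assms in \<open>auto intro!: bdd_belowI[where m=0]\<close>)

lemma opnorm_bound:
  assumes "bounded_l2 M" "l2 x"
  shows "l2norm (mv M x) \<le> opnorm2 M * l2norm x"
proof (cases "l2norm x = 0")
  case True
  from opnorm_set_ne[OF assms(1)] obtain C where "0 \<le> C" "\<forall>x. l2 x \<longrightarrow> l2norm (mv M x) \<le> C * l2norm x"
    by auto
  with True assms(2) have "l2norm (mv M x) \<le> 0" by force
  thus ?thesis using True by simp
next
  case False
  hence pos: "0 < l2norm x" using l2norm_nonneg[OF assms(2)] by simp
  have "l2norm (mv M x) / l2norm x \<le> opnorm2 M"
    unfolding opnorm2_def
  proof (rule cInf_greatest)
    show "{C. 0 \<le> C \<and> (\<forall>x. l2 x \<longrightarrow> l2norm (mv M x) \<le> C * l2norm x)} \<noteq> {}"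
      using opnorm_set_ne[OF assms(1)] by auto
  next
    fix C assume "C \<in> {C. 0 \<le> C \<and> (\<forall>x. l2 x \<longrightarrow> l2norm (mv M x) \<le> C * l2norm x)}"
    thus "l2norm (mv M x) / l2norm x \<le> C" using assms(2) pos by (auto simp: divide_le_eq)
  qed
  thus ?thesis using pos by (simp add: divide_le_eq mult.commute)
qed

lemma bounded_l2_summable: "bounded_l2 M \<Longrightarrow> l2 x \<Longrightarrow> summable (\<lambda>j. M i j * x j)"
  unfolding bounded_l2_def by blast

lemma bounded_l2_l2: "bounded_l2 M \<Longrightarrow> l2 x \<Longrightarrow> l2 (mv M x)"
  unfolding bounded_l2_def by blast

lemma bound_from_restr:
  assumes x: "l2 x" and rows: "\<And>i. summable (\<lambda>j. T i j * x j)"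
    and B: "\<And>N. l2 (mv T (restr N x)) \<and> l2norm (mv T (restr N x)) \<le> B"
  shows "l2 (mv T x) \<and> l2norm (mv T x) \<le> B"
proof -
  have B0: "0 \<le> B" using B[of 0] l2norm_nonneg by (meson order_trans)
  have part: "(\<Sum>i<P. (mv T (restr N x) i)\<^sup>2) \<le> B\<^sup>2" for N P
  proof -
    have "(\<Sum>i<P. (mv T (restr N x) i)\<^sup>2) \<le> (\<Sum>i. (mv T (restr N x) i)\<^sup>2)"
      using B[of N] unfolding l2_def by (intro sum_le_suminf) auto
    also have "\<dots> = (l2norm (mv T (restr N x)))\<^sup>2" using B[of N] by (simp add: l2norm_sq)
    also have "\<dots> \<le> B\<^sup>2" using B[of N] l2norm_nonneg by (intro power_mono) auto
    finally show ?thesis .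
  qed
  have conv: "(\<lambda>N. mv T (restr N x) i) \<longlonglongrightarrow> mv T x i" for i
  proof -
    have "mv T (restr N x) i = (\<Sum>j<N. T i j * x j)" for N
      by (subst mv_fs[of N]) (auto simp: restr_def fs_def)
    thus ?thesis unfolding mv_def using summable_LIMSEQ[OF rows[of i]] by simp
  qed
  have part2: "(\<Sum>i<P. (mv T x i)\<^sup>2) \<le> B\<^sup>2" for P
  proof (rule LIMSEQ_le_const2)
    show "(\<lambda>N. \<Sum>i<P. (mv T (restr N x) i)\<^sup>2) \<longlonglongrightarrow> (\<Sum>i<P. (mv T x i)\<^sup>2)"
      by (intro tendsto_sum tendsto_power conv)
    show "\<exists>N0. \<forall>N\<ge>N0. (\<Sum>i<P. (mv T (restr N x) i)\<^sup>2) \<le> B\<^sup>2" using part by auto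
  qed
  have sm: "summable (\<lambda>i. (mv T x i)\<^sup>2)"
    by (rule summableI_nonneg_bounded[OF _ part2]) auto
  have "(\<Sum>i. (mv T x i)\<^sup>2) \<le> B\<^sup>2" by (rule suminf_le_const[OF sm part2])
  hence "l2norm (mv T x) \<le> sqrt (B\<^sup>2)" unfolding l2norm_def by (rule real_sqrt_le_mono)
  thus ?thesis using sm B0 by (simp add: l2_def)
qed

lemma fin_surj:
  fixes T :: imat
  assumes inj: "\<And>x. fs N x \<Longrightarrow> (\<forall>i<N. (\<Sum>j<N. T i j * x j) = 0) \<Longrightarrow> (\<forall>i<N. x i = 0)"
  shows "\<exists>x. fs N x \<and> (\<forall>i<N. (\<Sum>j<N. T i j * x j) = y i)"
proof -
  define A where "A = Matrix.mat N N (\<lambda>(i,j). T i j)"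
  have A: "A \<in> carrier_mat N N" by (simp add: A_def)
  have Av: "(A *\<^sub>v v) $ i = (\<Sum>j<N. T i j * v $ j)" if "i < N" "v \<in> carrier_vec N" for v i
    using that by (simp add: A_def scalar_prod_def lessThan_atLeast0 mult.commute)
  have "Determinant.det A \<noteq> 0"
  proof
    assume "Determinant.det A = 0"
    then obtain v where v: "v \<in> carrier_vec N" "v \<noteq> 0\<^sub>v N" "A *\<^sub>v v = 0\<^sub>v N"
      using det_0_iff_vec_prod_zero_field[OF A] by blast
    define x where "x = (\<lambda>i. if i < N then v $ i else 0)"
    have "fs N x" by (simp add: fs_def x_def)
    moreover have "\<forall>i<N. (\<Sum>j<N. T i j * x j) = 0"
    proof (intro allI impI)
      fix i assume i: "i < N"
      have "(\<Sum>j<N. T i j * x j) = (A *\<^sub>v v) $ i" using Av[OF i v(1)] by (simp add: x_def)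
      also have "\<dots> = 0" using v(3) i by simp
      finally show "(\<Sum>j<N. T i j * x j) = 0" .
    qed
    ultimately have "\<forall>i<N. x i = 0" using inj by blast
    hence "v = 0\<^sub>v N" using v(1) by (auto simp: x_def)
    with v(2) show False by simp
  qed
  from det_non_zero_imp_unit[OF A this, of "()"]
  obtain B where B: "B \<in> carrier_mat N N" "A * B = 1\<^sub>m N"
    unfolding Units_def ring_mat_def by auto
  define w where "w = B *\<^sub>v vec N y"
  have w: "w \<in> carrier_vec N" using B by (simp add: w_def)
  have "A *\<^sub>v w = vec N y"
    unfolding w_def using A B by (simp add: assoc_mult_mat_vec[symmetric, of _ N N _ N])
  define x where "x = (\<lambda>i. if i < N then w $ i else 0)"
  have "fs N x" by (simp add: fs_def x_def)
  moreover have "\<forall>i<N. (\<Sum>j<N. T i j * x j) = y i"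
  proof (intro allI impI)
    fix i assume i: "i < N"
    have "(\<Sum>j<N. T i j * x j) = (A *\<^sub>v w) $ i" using Av[OF i w] by (simp add: x_def)
    also have "\<dots> = y i" using \<open>A *\<^sub>v w = vec N y\<close> i by simp
    finally show "(\<Sum>j<N. T i j * x j) = y i" .
  qed
  ultimately show ?thesis by blast
qed

definition bi :: "(nat \<Rightarrow> nat) \<Rightarrow> nat \<Rightarrow> nat" where
  "bi n i = (THE J. i \<in> blk n J)"

lemma blk_ex:
  assumes "block_structure n"
  shows "\<exists>J. i \<in> blk n J"
proof -
  have sm: "strict_mono n" and n0: "n 0 = 0" using assms by (auto simp: block_structure_def)
  define S where "S = {J. n J \<le> i}"
  have ge: "J \<le> n J" for J using sm by (rule strict_mono_imp_increasing)
  have fin: "finite S" unfolding S_def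
    by (rule finite_subset[of _ "{..i}"]) (auto intro: order_trans[OF ge])
  have "0 \<in> S" using n0 by (simp add: S_def)
  define J where "J = Max S"
  have "J \<in> S" using fin \<open>0 \<in> S\<close> unfolding J_def by (intro Max_in) auto
  moreover have "Suc J \<notin> S"
  proof
    assume "Suc J \<in> S"
    hence "Suc J \<le> J" unfolding J_def using fin by (simp add: Max_ge)
    thus False by simp
  qed
  ultimately show ?thesis by (auto simp: S_def blk_def not_le)
qed

lemma blk_uniq:
  assumes "block_structure n" "i \<in> blk n J" "i \<in> blk n K"
  shows "J = K"
proof -
  have sm: "strict_mono n" using assms by (auto simp: block_structure_def)
  have False if "J < K" "i \<in> blk n J" "i \<in> blk n K" for J K
  proof -
    have "n (Suc J) \<le> n K" using that(1) sm by (simp add: strict_mono_less_eq Suc_leI)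
    thus False using that by (auto simp: blk_def)
  qed
  thus ?thesis using assms by (cases J K rule: linorder_cases) auto
qed

lemma bi_blk: "block_structure n \<Longrightarrow> i \<in> blk n (bi n i)"
proof -
  assume bs: "block_structure n"
  have "\<exists>!J. i \<in> blk n J" using blk_ex[OF bs] blk_uniq[OF bs] by blast
  thus ?thesis unfolding bi_def by (rule theI')
qed

lemma bi_eq: "block_structure n \<Longrightarrow> i \<in> blk n J \<Longrightarrow> bi n i = J"
  using bi_blk blk_uniq by blast

lemma bi_lt_iff: "block_structure n \<Longrightarrow> i < n K \<longleftrightarrow> bi n i < K"
proof -
  assume bs: "block_structure n"
  have sm: "strict_mono n" using bs by (auto simp: block_structure_def)
  have b: "n (bi n i) \<le> i" "i < n (Suc (bi n i))" using bi_blk[OF bs, of i] by (auto simp: blk_def)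
  show ?thesis
  proof
    assume "i < n K"
    show "bi n i < K"
    proof (rule ccontr)
      assume "\<not> bi n i < K"
      hence "n K \<le> n (bi n i)" using sm by (simp add: strict_mono_less_eq)
      thus False using b \<open>i < n K\<close> by simp
    qed
  next
    assume "bi n i < K"
    hence "n (Suc (bi n i)) \<le> n K" using sm by (simp add: strict_mono_less_eq Suc_leI)
    thus "i < n K" using b by simp
  qed
qed

lemma n_ge: "block_structure n \<Longrightarrow> K \<le> n K"
  by (simp add: block_structure_def strict_mono_imp_increasing)

lemma blk_finite[simp]: "finite (blk n J)" by (simp add: blk_def)

lemma blk_iff: "block_structure n \<Longrightarrow> i \<in> blk n J \<longleftrightarrow> bi n i = J"
  using bi_eq bi_blk by blast

definition lin :: "(ivec \<Rightarrow> ivec) \<Rightarrow> bool" where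
  "lin f \<longleftrightarrow> (\<forall>x y. f (\<lambda>i. x i + y i) = (\<lambda>i. f x i + f y i)) \<and> (\<forall>a x. f (\<lambda>i. a * x i) = (\<lambda>i. a * f x i))"

lemma lin_add: "lin f \<Longrightarrow> f (\<lambda>i. x i + y i) = (\<lambda>i. f x i + f y i)"
  by (simp add: lin_def)

lemma lin_scale: "lin f \<Longrightarrow> f (\<lambda>i. a * x i) = (\<lambda>i. a * f x i)"
  by (simp add: lin_def)

lemma lin_zero: "lin f \<Longrightarrow> f (\<lambda>i. 0) = (\<lambda>i. 0)"
  using lin_scale[of f 0 "\<lambda>i. 0"] by simp

lemma lin_neg: "lin f \<Longrightarrow> f (\<lambda>i. - x i) = (\<lambda>i. - f x i)"
  using lin_scale[of f "-1" x] by simp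

lemma lin_diff: "lin f \<Longrightarrow> f (\<lambda>i. x i - y i) = (\<lambda>i. f x i - f y i)"
  using lin_add[of f x "\<lambda>i. - y i"] lin_neg[of f y] by simp

lemma lin_sum:
  assumes lf: "lin f" and fin: "finite S"
  shows "f (\<lambda>i. \<Sum>l\<in>S. g l i) = (\<lambda>i. \<Sum>l\<in>S. f (g l) i)"
  using fin
proof (induction S rule: finite_induct)
  case empty
  then show ?case by (simp add: lin_zero[OF lf])
next
  case (insert a S)
  have "f (\<lambda>i. \<Sum>l\<in>insert a S. g l i) = f (\<lambda>i. g a i + (\<Sum>l\<in>S. g l i))"
    using insert by simp
  also have "\<dots> = (\<lambda>i. f (g a) i + f (\<lambda>i. \<Sum>l\<in>S. g l i) i)" using insert by (simp add: lin_add[OF lf])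
  finally show ?case using insert by simp
qed

lemma lin_comp: "lin f \<Longrightarrow> lin g \<Longrightarrow> lin (\<lambda>x. f (g x))"
  by (simp add: lin_def)

lemma lin_funpow: "lin f \<Longrightarrow> lin (f ^^ m)"
proof (induction m)
  case 0
  then show ?case by (simp add: lin_def)
next
  case (Suc m)
  then show ?case using lin_comp[of f "f ^^ m"] by (simp add: comp_def)
qed

lemma lin_eq_sum_basis:
  assumes "lin f" "finite S" "\<And>i. i \<notin> S \<Longrightarrow> y i = 0"
  shows "f y = (\<lambda>i. \<Sum>l\<in>S. y l * f (\<lambda>j. if j = l then 1 else 0) i)"
proof -
  have yi: "(\<Sum>l\<in>S. y l * (if i = l then 1 else 0)) = y i" for i
  proof -
    have "(\<Sum>l\<in>S. y l * (if i = l then 1 else 0)) = (\<Sum>l\<in>S. if l = i then y i else 0)"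
      by (rule sum.cong) auto
    also have "\<dots> = (if i \<in> S then y i else 0)" using assms(2) by simp
    also have "\<dots> = y i" using assms(3) by auto
    finally show ?thesis .
  qed
  have "y = (\<lambda>i. \<Sum>l\<in>S. y l * (if i = l then 1 else 0))"
    using yi by simp
  hence "f y = f (\<lambda>i. \<Sum>l\<in>S. (\<lambda>i. y l * (if i = l then 1 else 0)) i)" by simp
  also have "\<dots> = (\<lambda>i. \<Sum>l\<in>S. f (\<lambda>i. y l * (if i = l then 1 else 0)) i)"
    by (rule lin_sum[OF assms(1,2)])
  also have "\<dots> = (\<lambda>i. \<Sum>l\<in>S. y l * f (\<lambda>j. if j = l then 1 else 0) i)"
    using lin_scale[OF assms(1)] by simp
  finally show ?thesis .
qed

lemma mv_sum:
  assumes "finite S" "\<And>l. l \<in> S \<Longrightarrow> fs N (g l)"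
  shows "mv T (\<lambda>i. \<Sum>l\<in>S. g l i) = (\<lambda>i. \<Sum>l\<in>S. mv T (g l) i)"
proof -
  have fsS: "fs N (\<lambda>i. \<Sum>l\<in>S. g l i)" using assms by (auto simp: fs_def)
  show ?thesis
  proof (rule ext)
    fix i
    have "mv T (\<lambda>i. \<Sum>l\<in>S. g l i) i = (\<Sum>j<N. T i j * (\<Sum>l\<in>S. g l j))" by (rule mv_fs[OF fsS])
    also have "\<dots> = (\<Sum>j<N. \<Sum>l\<in>S. T i j * g l j)" by (simp add: sum_distrib_left)
    also have "\<dots> = (\<Sum>l\<in>S. \<Sum>j<N. T i j * g l j)" by (rule sum.swap)
    also have "\<dots> = (\<Sum>l\<in>S. mv T (g l) i)" using assms by (simp add: mv_fs[of N])
    finally show "mv T (\<lambda>i. \<Sum>l\<in>S. g l i) i = (\<Sum>l\<in>S. mv T (g l) i)" .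
  qed
qed

lemma mv_add_fs: "fs N x \<Longrightarrow> fs N y \<Longrightarrow> mv T (\<lambda>i. x i + y i) = (\<lambda>i. mv T x i + mv T y i)"
proof -
  assume "fs N x" "fs N y"
  moreover have "fs N (\<lambda>i. x i + y i)" using calculation by (auto simp: fs_def)
  ultimately show ?thesis by (auto simp: mv_fs[of N] fun_eq_iff sum.distrib algebra_simps)
qed

lemma mv_scale_fs: "fs N x \<Longrightarrow> mv T (\<lambda>i. a * x i) = (\<lambda>i. a * mv T x i)"
proof -
  assume "fs N x"
  moreover have "fs N (\<lambda>i. a * x i)" using calculation by (auto simp: fs_def)
  ultimately show ?thesis by (auto simp: mv_fs[of N] fun_eq_iff sum_distrib_left algebra_simps)
qed

lemma mv_diff_fs: "fs N x \<Longrightarrow> fs N y \<Longrightarrow> mv T (\<lambda>i. x i - y i) = (\<lambda>i. mv T x i - mv T y i)"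
proof -
  assume a: "fs N x" "fs N y"
  have "fs N (\<lambda>i. - y i)" using a by (auto simp: fs_def)
  moreover have "mv T (\<lambda>i. - y i) = (\<lambda>i. - mv T y i)" using mv_scale_fs[OF a(2), of T "-1"] by simp
  ultimately show ?thesis using mv_add_fs[OF a(1), of "\<lambda>i. - y i" T] by simp
qed

lemma mv_zero[simp]: "mv T (\<lambda>i. 0) = (\<lambda>i. 0)"
  by (simp add: mv_def)

lemma mv_l2_diff:
  assumes "\<And>i. summable (\<lambda>j. T i j * x j)" "\<And>i. summable (\<lambda>j. T i j * y j)"
  shows "mv T (\<lambda>i. x i - y i) = (\<lambda>i. mv T x i - mv T y i)"
proof (rule ext)
  fix i show "mv T (\<lambda>i. x i - y i) i = mv T x i - mv T y i"
    unfolding mv_def using suminf_diff[OF assms(1)[of i] assms(2)[of i]] by (simp add: algebra_simps)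
qed

lemma mdiff_mv:
  assumes "\<And>i. summable (\<lambda>j. A i j * x j)" "\<And>i. summable (\<lambda>j. B i j * x j)"
  shows "mv (mdiff A B) x = (\<lambda>i. mv A x i - mv B x i)"
proof (rule ext)
  fix i show "mv (mdiff A B) x i = mv A x i - mv B x i"
    unfolding mv_def mdiff_def using suminf_diff[OF assms(1)[of i] assms(2)[of i]] by (simp add: algebra_simps)
qed

lemma L2_set_subset: "finite B \<Longrightarrow> A \<subseteq> B \<Longrightarrow> L2_set f A \<le> L2_set f B"
  unfolding L2_set_def by (auto intro!: real_sqrt_le_mono sum_mono2)

lemma L2_set_sum_le: "finite S \<Longrightarrow> L2_set (\<lambda>i. \<Sum>l\<in>S. g l i) A \<le> (\<Sum>l\<in>S. L2_set (g l) A)"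
proof (induction S rule: finite_induct)
  case empty
  then show ?case by (simp add: L2_set_0')
next
  case (insert a S)
  have "L2_set (\<lambda>i. \<Sum>l\<in>insert a S. g l i) A = L2_set (\<lambda>i. g a i + (\<Sum>l\<in>S. g l i)) A"
    using insert by simp
  also have "\<dots> \<le> L2_set (g a) A + L2_set (\<lambda>i. \<Sum>l\<in>S. g l i) A" by (rule L2_set_triangle_ineq)
  finally show ?case using insert by simp
qed

lemma L2_set_diff_le: "L2_set (\<lambda>i. f i - g i) A \<le> L2_set f A + L2_set g A"
proof -
  have "L2_set (\<lambda>i. f i - g i) A = L2_set (\<lambda>i. f i + (- g i)) A" by simp
  also have "\<dots> \<le> L2_set f A + L2_set (\<lambda>i. - g i) A" by (rule L2_set_triangle_ineq)
  also have "L2_set (\<lambda>i. - g i) A = L2_set g A" by (simp add: L2_set_def)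
  finally show ?thesis .
qed

lemma L2_set_sq: "(L2_set f A)\<^sup>2 = (\<Sum>i\<in>A. (f i)\<^sup>2)"
  unfolding L2_set_def by (simp add: sum_nonneg)

lemma abs_le_L2_set: "finite A \<Longrightarrow> i \<in> A \<Longrightarrow> \<bar>f i\<bar> \<le> L2_set f A"
  using member_le_L2_set[of A i "\<lambda>i. \<bar>f i\<bar>"] by (simp add: L2_set_def)

locale setting =
  fixes M L U Uinv :: imat and n :: "nat \<Rightarrow> nat" and d :: "nat \<Rightarrow> nat \<Rightarrow> real" and b0 :: nat
  assumes bM: "bounded_l2 M" and eM: "elliptic M" and bs: "block_structure n"
    and band: "blk_banded n b0 M" and met: "nat_metric d" and inBM: "in_B d b0 M"
    and LU: "\<forall>i j. M i j = mmul L U i j"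
    and Llow: "blk_lower n L" and Lunit: "blk_unit_diag n L" and Uup: "blk_upper n U"
    and Uinv: "is_bounded_inverse U Uinv" and b0pos: "1 \<le> b0"
begin

abbreviation "bx \<equiv> bi n"

lemma bx_blk: "i \<in> blk n (bx i)" by (rule bi_blk[OF bs])
lemma bx_lt: "i < n K \<longleftrightarrow> bx i < K" by (rule bi_lt_iff[OF bs])
lemma blk_bx: "i \<in> blk n J \<longleftrightarrow> bx i = J" by (rule blk_iff[OF bs])
lemma nK: "K \<le> n K" by (rule n_ge[OF bs])

lemma d0: "d i i = 0" using met by (simp add: nat_metric_def)
lemma dtri: "d i k \<le> d i j + d j k" using met by (simp add: nat_metric_def)
lemma dsym: "d i j = d j i" using met by (simp add: nat_metric_def)

lemma M_entry:
  assumes h: "M i j \<noteq> 0"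
  shows "d i j \<le> real b0 \<and> bx j \<le> bx i + b0 \<and> bx i \<le> bx j + b0"
proof -
  have "d i j \<le> b0"
  proof (rule ccontr)
    assume "\<not> d i j \<le> real b0"
    hence "d i j > real b0" by simp
    hence "M i j = 0" using inBM unfolding in_B_def by blast
    thus False using h by simp
  qed
  moreover have "\<not> (\<bar>int (bx i) - int (bx j)\<bar> > int b0)"
  proof
    assume "\<bar>int (bx i) - int (bx j)\<bar> > int b0"
    hence "blk_zero n M (bx i) (bx j)" using band by (simp add: blk_banded_def)
    hence "M i j = 0" using bx_blk[of i] bx_blk[of j] by (simp add: blk_zero_def)
    thus False using h by simp
  qed
  ultimately show ?thesis by linarith
qed

lemma U_entry: "U i j \<noteq> 0 \<Longrightarrow> bx i \<le> bx j"
proof (rule ccontr)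
  assume "U i j \<noteq> 0" "\<not> bx i \<le> bx j"
  hence "blk_zero n U (bx i) (bx j)" using Uup by (simp add: blk_upper_def)
  hence "U i j = 0" using bx_blk[of i] bx_blk[of j] by (simp add: blk_zero_def)
  thus False using \<open>U i j \<noteq> 0\<close> by simp
qed

lemma L_entry: "L i j \<noteq> 0 \<Longrightarrow> bx j \<le> bx i"
proof (rule ccontr)
  assume "L i j \<noteq> 0" "\<not> bx j \<le> bx i"
  hence "blk_zero n L (bx i) (bx j)" using Llow by (simp add: blk_lower_def)
  hence "L i j = 0" using bx_blk[of i] bx_blk[of j] by (simp add: blk_zero_def)
  thus False using \<open>L i j \<noteq> 0\<close> by simp
qed

lemma L_diag: "bx i = bx j \<Longrightarrow> L i j = (if i = j then 1 else 0)"
proof -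
  assume "bx i = bx j"
  hence "i \<in> blk n (bx i)" "j \<in> blk n (bx i)" using bx_blk[of i] bx_blk[of j] by auto
  thus ?thesis using Lunit unfolding blk_unit_diag_def by blast
qed

lemma bU: "bounded_l2 U" and bUinv: "bounded_l2 Uinv"
  using Uinv by (auto simp: is_bounded_inverse_def)

lemma UUinv: "l2 x \<Longrightarrow> mv U (mv Uinv x) = x" "l2 x \<Longrightarrow> mv Uinv (mv U x) = x"
  using Uinv by (auto simp: is_bounded_inverse_def)

definition "betaM = opnorm2 M"
definition "bU = opnorm2 U + 1"
definition "gam = opnorm2 Uinv"

lemma betaM_nonneg: "0 \<le> betaM" by (simp add: betaM_def opnorm_nonneg[OF bM])
lemma bU_pos: "0 < bU" using opnorm_nonneg[OF bU] by (simp add: bU_def)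
lemma gam_nonneg: "0 \<le> gam" by (simp add: gam_def opnorm_nonneg[OF bUinv])

lemma M_norm: "l2 x \<Longrightarrow> l2 (mv M x) \<and> l2norm (mv M x) \<le> betaM * l2norm x"
  using bounded_l2_l2[OF bM] opnorm_bound[OF bM] by (simp add: betaM_def)

lemma U_norm: "l2 x \<Longrightarrow> l2 (mv U x) \<and> l2norm (mv U x) \<le> bU * l2norm x"
proof -
  assume x: "l2 x"
  have "l2norm (mv U x) \<le> opnorm2 U * l2norm x" by (rule opnorm_bound[OF bU x])
  also have "\<dots> \<le> bU * l2norm x" unfolding bU_def using l2norm_nonneg[OF x]
    by (simp add: distrib_right)
  finally show ?thesis using bounded_l2_l2[OF bU x] by simp
qed

lemma Uinv_norm: "l2 x \<Longrightarrow> l2 (mv Uinv x) \<and> l2norm (mv Uinv x) \<le> gam * l2norm x"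
  using bounded_l2_l2[OF bUinv] opnorm_bound[OF bUinv] by (simp add: gam_def)

definition "cE = (SOME C. C > 0 \<and> (\<forall>x. l2 x \<longrightarrow> l2inner (mv M x) x \<ge> C * (l2norm x)\<^sup>2))"

lemma cE: "0 < cE" "l2 x \<Longrightarrow> l2inner (mv M x) x \<ge> cE * (l2norm x)\<^sup>2"
proof -
  have ex: "\<exists>C. C > 0 \<and> (\<forall>x. l2 x \<longrightarrow> l2inner (mv M x) x \<ge> C * (l2norm x)\<^sup>2)"
    using eM by (simp add: elliptic_def)
  from someI_ex[OF ex] show "0 < cE" "l2 x \<Longrightarrow> l2inner (mv M x) x \<ge> cE * (l2norm x)\<^sup>2"
    unfolding cE_def by auto
qed

definition "omega = cE / (betaM\<^sup>2 + cE\<^sup>2)"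
definition "tq = 1 - 2 * omega * cE + omega\<^sup>2 * betaM\<^sup>2"
definition "q = sqrt (max 0 tq)"

lemma omega_pos: "0 < omega"
  using cE(1) by (simp add: omega_def add_nonneg_pos)

lemma tq_lt1: "tq < 1"
proof -
  have den: "0 < betaM\<^sup>2 + cE\<^sup>2" using cE(1) by (simp add: add_nonneg_pos)
  have "omega * betaM\<^sup>2 < 2 * cE"
  proof -
    have "omega * betaM\<^sup>2 = cE * (betaM\<^sup>2 / (betaM\<^sup>2 + cE\<^sup>2))" by (simp add: omega_def)
    also have "betaM\<^sup>2 / (betaM\<^sup>2 + cE\<^sup>2) \<le> 1" using den by simp
    hence "cE * (betaM\<^sup>2 / (betaM\<^sup>2 + cE\<^sup>2)) \<le> cE" using cE(1) by (intro mult_left_le) auto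
    finally show ?thesis using cE(1) by simp
  qed
  hence "omega * (omega * betaM\<^sup>2) < omega * (2 * cE)" using omega_pos by simp
  thus ?thesis by (simp add: tq_def power2_eq_square algebra_simps)
qed

lemma q_props: "0 \<le> q" "q < 1" "tq \<le> q\<^sup>2"
  using tq_lt1 by (auto simp: q_def real_sqrt_lt_1_iff)

section \<open>Finite sections\<close>

definition A :: "nat \<Rightarrow> ivec \<Rightarrow> ivec" where
  "A N x = (\<lambda>i. if i < N then \<Sum>j<N. M i j * x j else 0)"

definition R :: "nat \<Rightarrow> ivec \<Rightarrow> ivec" where
  "R N x = (\<lambda>i. x i - omega * A N x i)"

definition Z :: "nat \<Rightarrow> nat \<Rightarrow> ivec \<Rightarrow> ivec" where
  "Z N k x = (\<lambda>i. omega * (\<Sum>m<k. (R N ^^ m) x i))"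

lemma lin_A: "lin (A N)"
proof -
  have "A N (\<lambda>i. x i + y i) = (\<lambda>i. A N x i + A N y i)" for x y
    by (simp add: A_def fun_eq_iff sum.distrib distrib_left)
  moreover have "A N (\<lambda>i. a * x i) = (\<lambda>i. a * A N x i)" for a x
    by (simp add: A_def fun_eq_iff sum_distrib_left mult.left_commute)
  ultimately show ?thesis by (simp add: lin_def)
qed

lemma lin_R: "lin (R N)"
proof -
  have "R N (\<lambda>i. x i + y i) = (\<lambda>i. R N x i + R N y i)" for x y
    by (simp add: R_def lin_add[OF lin_A] algebra_simps)
  moreover have "R N (\<lambda>i. a * x i) = (\<lambda>i. a * R N x i)" for a x
    by (simp add: R_def lin_scale[OF lin_A] algebra_simps)
  ultimately show ?thesis by (simp add: lin_def)
qed

lemma lin_Rp: "lin (R N ^^ m)" by (rule lin_funpow[OF lin_R])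

lemma lin_Z: "lin (Z N k)"
proof -
  have "Z N k (\<lambda>i. x i + y i) = (\<lambda>i. Z N k x i + Z N k y i)" for x y
    by (simp add: Z_def lin_add[OF lin_Rp] sum.distrib algebra_simps)
  moreover have "Z N k (\<lambda>i. a * x i) = (\<lambda>i. a * Z N k x i)" for a x
    by (simp add: Z_def lin_scale[OF lin_Rp] sum_distrib_left algebra_simps)
  ultimately show ?thesis by (simp add: lin_def)
qed

lemma R_A: "R N (A N x) = A N (R N x)"
proof -
  have "A N (R N x) = (\<lambda>i. A N x i - omega * A N (A N x) i)"
    unfolding R_def using lin_diff[OF lin_A, of N x "\<lambda>i. omega * A N x i"] lin_scale[OF lin_A]
    by simp
  thus ?thesis by (simp add: R_def)
qed

lemma Rp_A: "(R N ^^ m) (A N x) = A N ((R N ^^ m) x)"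
  by (induction m) (simp_all add: R_A)

lemma Z_A: "Z N k (A N v) = (\<lambda>i. v i - (R N ^^ k) v i)"
proof (rule ext)
  fix i
  have "Z N k (A N v) i = (\<Sum>m<k. omega * A N ((R N ^^ m) v) i)"
    by (simp add: Z_def Rp_A sum_distrib_left)
  also have "\<dots> = (\<Sum>m<k. (R N ^^ m) v i - (R N ^^ Suc m) v i)"
    by (simp add: R_def)
  also have "\<dots> = v i - (R N ^^ k) v i"
    by (subst sum_lessThan_telescope') simp
  finally show "Z N k (A N v) i = v i - (R N ^^ k) v i" .
qed

lemma fs_A: "fs N (A N x)" by (simp add: fs_def A_def)
lemma fs_R: "fs N x \<Longrightarrow> fs N (R N x)" using fs_A[of N x] by (simp add: fs_def R_def)
lemma fs_Rp: "fs N x \<Longrightarrow> fs N ((R N ^^ m) x)" by (induction m) (simp_all add: fs_R)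
lemma fs_Z: "fs N x \<Longrightarrow> fs N (Z N k x)" using fs_Rp[of N x] by (simp add: fs_def Z_def)

lemma A_fs: "fs N x \<Longrightarrow> A N x = (\<lambda>i. if i < N then mv M x i else 0)"
  by (simp add: A_def mv_fs[of N] fun_eq_iff)

lemma l2norm_fs_sq: "fs N x \<Longrightarrow> (l2norm x)\<^sup>2 = (\<Sum>i<N. (x i)\<^sup>2)"
  using l2norm_fs[of N x] by (simp add: L2_set_sq)

lemma R_contr:
  assumes w: "fs N w"
  shows "l2norm (R N w) \<le> q * l2norm w"
proof -
  define s where "s = (\<Sum>i<N. (w i)\<^sup>2)"
  define p where "p = (\<Sum>i<N. mv M w i * w i)"
  define r where "r = (\<Sum>i<N. (mv M w i)\<^sup>2)"
  have l2w: "l2 w" using w by (rule l2_fs)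
  have s0: "0 \<le> s" unfolding s_def by (simp add: sum_nonneg)
  have ws: "(l2norm w)\<^sup>2 = s" unfolding s_def by (rule l2norm_fs_sq[OF w])
  have Rw: "R N w i = w i - omega * mv M w i" if "i < N" for i
    using that by (simp add: R_def A_fs[OF w])
  have "(l2norm (R N w))\<^sup>2 = (\<Sum>i<N. (R N w i)\<^sup>2)" by (rule l2norm_fs_sq[OF fs_R[OF w]])
  also have "\<dots> = (\<Sum>i<N. (w i - omega * mv M w i)\<^sup>2)" by (rule sum.cong) (simp_all add: Rw)
  also have "\<dots> = (\<Sum>i<N. (w i)\<^sup>2 - 2 * omega * (mv M w i * w i) + omega\<^sup>2 * (mv M w i)\<^sup>2)"
    by (rule sum.cong) (auto simp: power2_eq_square algebra_simps)
  also have "\<dots> = s - 2 * omega * p + omega\<^sup>2 * r"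
    by (simp add: s_def p_def r_def sum.distrib sum_subtractf sum_distrib_left)
  also have "\<dots> \<le> s - 2 * omega * (cE * s) + omega\<^sup>2 * (betaM\<^sup>2 * s)"
  proof -
    have "p = l2inner (mv M w) w" by (simp add: p_def inner_fs[OF w])
    also have "\<dots> \<ge> cE * (l2norm w)\<^sup>2" by (rule cE(2)[OF l2w])
    finally have p: "cE * s \<le> p" by (simp add: s_def l2norm_fs_sq[OF w])
    have "r \<le> (\<Sum>i. (mv M w i)\<^sup>2)" unfolding r_def
      using M_norm[OF l2w] by (intro sum_le_suminf) (auto simp: l2_def)
    also have "\<dots> = (l2norm (mv M w))\<^sup>2" using M_norm[OF l2w] by (simp add: l2norm_sq)
    also have "\<dots> \<le> (betaM * l2norm w)\<^sup>2"
      using M_norm[OF l2w] l2norm_nonneg[of "mv M w"] by (intro power_mono) auto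
    also have "\<dots> = betaM\<^sup>2 * s" by (simp add: power_mult_distrib s_def l2norm_fs_sq[OF w])
    finally have r: "r \<le> betaM\<^sup>2 * s" .
    have "2 * omega * (cE * s) \<le> 2 * omega * p" using p omega_pos by simp
    moreover have "omega\<^sup>2 * r \<le> omega\<^sup>2 * (betaM\<^sup>2 * s)" using r by (simp add: mult_left_mono)
    ultimately show ?thesis by linarith
  qed
  also have "\<dots> = tq * s" unfolding tq_def by (simp only: distrib_right left_diff_distrib mult.left_neutral mult.assoc)
  also have "\<dots> \<le> q\<^sup>2 * s" using q_props(3) s0 by (rule mult_right_mono)
  also have "\<dots> = (q * l2norm w)\<^sup>2" by (simp add: power_mult_distrib ws)
  finally have "(l2norm (R N w))\<^sup>2 \<le> (q * l2norm w)\<^sup>2" .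
  thus ?thesis
    by (rule power2_le_imp_le) (use q_props(1) l2norm_nonneg[OF l2w] in auto)
qed

lemma Rp_contr:
  assumes w: "fs N w"
  shows "l2norm ((R N ^^ m) w) \<le> q ^ m * l2norm w"
proof (induction m)
  case 0
  then show ?case by simp
next
  case (Suc m)
  have "l2norm ((R N ^^ Suc m) w) \<le> q * l2norm ((R N ^^ m) w)"
    using R_contr[OF fs_Rp[OF w, of m]] by simp
  also have "\<dots> \<le> q * (q ^ m * l2norm w)" using Suc q_props(1) by (rule mult_left_mono)
  finally show ?case by simp
qed

lemma sum_nz: "(\<Sum>j\<in>S. f j) \<noteq> (0::real) \<Longrightarrow> \<exists>j\<in>S. f j \<noteq> 0"
proof (rule ccontr)
  assume a: "(\<Sum>j\<in>S. f j) \<noteq> 0" "\<not> (\<exists>j\<in>S. f j \<noteq> 0)"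
  hence "\<forall>j\<in>S. f j = 0" by blast
  hence "(\<Sum>j\<in>S. f j) = 0" by simp
  thus False using a by simp
qed

lemma Rp_supp:
  "(R N ^^ m) x i \<noteq> 0 \<Longrightarrow> \<exists>j. x j \<noteq> 0 \<and> d i j \<le> real (m * b0) \<and> bx j \<le> bx i + m * b0"
proof (induction m arbitrary: i)
  case 0
  then show ?case using d0[of i] by auto
next
  case (Suc m)
  define y where "y = (R N ^^ m) x"
  have "R N y i \<noteq> 0" using Suc.prems by (simp add: y_def)
  hence "y i \<noteq> 0 \<or> A N y i \<noteq> 0" by (auto simp: R_def)
  thus ?case
  proof
    assume "y i \<noteq> 0"
    then obtain j where "x j \<noteq> 0" "d i j \<le> real (m * b0)" "bx j \<le> bx i + m * b0"
      using Suc.IH y_def by blast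
    moreover have "real (m * b0) \<le> real (Suc m * b0)" by simp
    ultimately show ?thesis by (intro exI[of _ j]) auto
  next
    assume "A N y i \<noteq> 0"
    hence "(\<Sum>j<N. M i j * y j) \<noteq> 0" by (auto simp: A_def split: if_splits)
    then obtain j' where "M i j' * y j' \<noteq> 0" using sum_nz by blast
    hence Mij: "M i j' \<noteq> 0" and yj: "y j' \<noteq> 0" by auto
    from Suc.IH[of j'] yj obtain j where j: "x j \<noteq> 0" "d j' j \<le> real (m * b0)" "bx j \<le> bx j' + m * b0"
      using y_def by blast
    from M_entry[OF Mij] have m: "d i j' \<le> real b0" "bx j' \<le> bx i + b0" by auto
    have "d i j \<le> d i j' + d j' j" by (rule dtri)
    also have "\<dots> \<le> real b0 + real (m * b0)" using m j by simp
    also have "\<dots> = real (Suc m * b0)" by simp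
    finally show ?thesis using j m by (intro exI[of _ j]) auto
  qed
qed

lemma Z_supp:
  assumes "Z N k x i \<noteq> 0"
  shows "\<exists>j. x j \<noteq> 0 \<and> d i j \<le> real ((k - 1) * b0) \<and> bx j \<le> bx i + (k - 1) * b0"
proof -
  have "(\<Sum>m<k. (R N ^^ m) x i) \<noteq> 0" using assms by (auto simp: Z_def)
  then obtain m where m: "m < k" "(R N ^^ m) x i \<noteq> 0" using sum_nz by blast
  then obtain j where j: "x j \<noteq> 0" "d i j \<le> real (m * b0)" "bx j \<le> bx i + m * b0"
    using Rp_supp by blast
  have "m \<le> k - 1" using m(1) by simp
  hence mk: "m * b0 \<le> (k - 1) * b0" by (rule mult_right_mono) simp
  hence "real (m * b0) \<le> real ((k - 1) * b0)" by (simp only: of_nat_le_iff)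
  hence "d i j \<le> real ((k - 1) * b0)" using j(2) by linarith
  moreover have "bx j \<le> bx i + (k - 1) * b0" using j(3) mk by linarith
  ultimately show ?thesis using j(1) by blast
qed

lemma M_supp: "fs N x \<Longrightarrow> mv M x i \<noteq> 0 \<Longrightarrow> \<exists>j. M i j \<noteq> 0 \<and> x j \<noteq> 0"
  using sum_nz by (force simp: mv_fs[of N])

end

context setting begin

lemma smono: "strict_mono n" using bs by (simp add: block_structure_def)
lemma n0: "n 0 = 0" using bs by (simp add: block_structure_def)
lemma n_Suc: "n Q \<le> n (Suc Q)" using smono by (simp add: strict_mono_less_eq)
lemma n_mono: "Q \<le> Q' \<Longrightarrow> n Q \<le> n Q'" using smono by (simp add: strict_mono_less_eq)

lemma U_fs: assumes x: "fs (n K) x" shows "fs (n K) (mv U x)"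
  unfolding fs_def
proof (intro allI impI)
  fix i assume i: "n K \<le> i"
  have zz: "U i j * x j = 0" if "j < n K" for j
  proof -
    have "bx j < K" using that bx_lt by simp
    moreover have "\<not> bx i < K" using i bx_lt[of i K] by simp
    ultimately have "U i j = 0" using U_entry[of i j] by fastforce
    thus ?thesis by simp
  qed
  have "mv U x i = (\<Sum>j<n K. U i j * x j)" by (rule mv_fs[OF x])
  also have "\<dots> = 0" by (rule sum.neutral) (simp add: zz)
  finally show "mv U x i = 0" .
qed

lemma Uinv_fs: assumes y: "fs (n K) y" shows "fs (n K) (mv Uinv y)"
proof -
  let ?N = "n K"
  have inj: "\<forall>i<?N. x i = 0" if xf: "fs ?N x" and h: "\<forall>i<?N. (\<Sum>j<?N. U i j * x j) = 0" for x
  proof -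
    have "mv U x = (\<lambda>i. 0)"
    proof (rule ext)
      fix i show "mv U x i = 0"
      proof (cases "i < ?N")
        case True thus ?thesis using h mv_fs[OF xf, of U i] by simp
      next
        case False thus ?thesis using U_fs[OF xf] by (simp add: fs_def)
      qed
    qed
    have "x = mv Uinv (mv U x)" by (simp add: UUinv(2)[OF l2_fs[OF xf]])
    also have "\<dots> = (\<lambda>i. 0)" unfolding \<open>mv U x = (\<lambda>i. 0)\<close> by simp
    finally show ?thesis by simp
  qed
  obtain x where x: "fs ?N x" "\<forall>i<?N. (\<Sum>j<?N. U i j * x j) = y i"
    using fin_surj[of ?N U y] inj by blast
  have "mv U x = y"
  proof (rule ext)
    fix i show "mv U x i = y i"
    proof (cases "i < ?N")
      case True thus ?thesis using x mv_fs[OF x(1), of U i] by simp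
    next
      case False thus ?thesis using U_fs[OF x(1)] y by (simp add: fs_def)
    qed
  qed
  hence "mv Uinv y = x" using UUinv(2)[OF l2_fs[OF x(1)]] by simp
  thus ?thesis using x(1) by simp
qed

lemma LU_mv:
  assumes x: "fs N x"
  shows "mv M x i = (\<Sum>k<n (Suc (bx i)). L i k * mv U x k)"
proof -
  let ?K = "n (Suc (bx i))"
  have mm: "M i j = (\<Sum>k<?K. L i k * U k j)" for j
  proof -
    have "M i j = mmul L U i j" using LU by simp
    also have "\<dots> = (\<Sum>k<?K. L i k * U k j)" unfolding mmul_def
    proof (rule suminf_fs(1))
      fix k assume "?K \<le> k"
      hence "\<not> bx k \<le> bx i" using bx_lt[of k "Suc (bx i)"] by simp
      hence "L i k = 0" using L_entry by force
      thus "L i k * U k j = 0" by simp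
    qed
    finally show ?thesis .
  qed
  have "mv M x i = (\<Sum>j<N. M i j * x j)" by (rule mv_fs[OF x])
  also have "\<dots> = (\<Sum>j<N. \<Sum>k<?K. L i k * U k j * x j)" by (simp add: mm sum_distrib_right)
  also have "\<dots> = (\<Sum>k<?K. \<Sum>j<N. L i k * U k j * x j)" by (rule sum.swap)
  also have "\<dots> = (\<Sum>k<?K. L i k * mv U x k)" by (simp add: mv_fs[OF x] sum_distrib_left mult.assoc)
  finally show ?thesis .
qed

lemma Lsolve:
  assumes z: "\<And>k. z k \<noteq> 0 \<Longrightarrow> bx k = J" and i: "i < n (Suc J)"
  shows "(\<Sum>k<n (Suc (bx i)). L i k * z k) = z i"
proof -
  let ?K = "n (Suc (bx i))"
  have iJ: "bx i \<le> J" using i bx_lt by simp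
  have t: "L i k * z k = (if k = i then z i else 0)" if k: "k < ?K" for k
  proof (cases "z k = 0")
    case True thus ?thesis by auto
  next
    case False
    hence "bx k = J" using z by simp
    moreover have "bx k \<le> bx i" using k bx_lt by simp
    ultimately have "bx i = bx k" using iJ by simp
    thus ?thesis using L_diag[of i k] by auto
  qed
  have "(\<Sum>k<?K. L i k * z k) = (\<Sum>k<?K. if k = i then z i else 0)" by (rule sum.cong) (auto simp: t)
  also have "\<dots> = z i" using bx_blk[of i] by (simp add: blk_def)
  finally show ?thesis .
qed

lemma inblk_fs: "(\<And>k. z k \<noteq> 0 \<Longrightarrow> bx k = J) \<Longrightarrow> fs (n (Suc J)) z"
  unfolding fs_def using bx_lt by (metis lessI not_le)

lemma MUinv:
  assumes z: "\<And>k. z k \<noteq> 0 \<Longrightarrow> bx k = J"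
  shows "fs (n (Suc J)) (mv Uinv z)" and "\<And>i. i < n (Suc J) \<Longrightarrow> mv M (mv Uinv z) i = z i"
proof -
  have zf: "fs (n (Suc J)) z" by (rule inblk_fs[OF z])
  show xf: "fs (n (Suc J)) (mv Uinv z)" by (rule Uinv_fs[OF zf])
  fix i assume i: "i < n (Suc J)"
  have "mv M (mv Uinv z) i = (\<Sum>k<n (Suc (bx i)). L i k * mv U (mv Uinv z) k)" by (rule LU_mv[OF xf])
  also have "\<dots> = (\<Sum>k<n (Suc (bx i)). L i k * z k)" using UUinv(1)[OF l2_fs[OF zf]] by simp
  also have "\<dots> = z i" by (rule Lsolve[OF z i])
  finally show "mv M (mv Uinv z) i = z i" .
qed

definition bp :: "nat \<Rightarrow> ivec \<Rightarrow> ivec" where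
  "bp J x = (\<lambda>i. if bx i = J then x i else 0)"

lemma bp_supp: "bp J x i \<noteq> 0 \<Longrightarrow> bx i = J" by (simp add: bp_def split: if_splits)

lemma fs_bp: "fs (n (Suc J)) (bp J x)" by (rule inblk_fs) (rule bp_supp)

lemma sum_bp: assumes x: "fs (n Q) x" shows "x = (\<lambda>i. \<Sum>J<Q. bp J x i)"
proof (rule ext)
  fix i
  have "(\<Sum>J<Q. bp J x i) = (\<Sum>J<Q. if J = bx i then x i else 0)"
    by (rule sum.cong) (auto simp: bp_def)
  also have "\<dots> = (if bx i < Q then x i else 0)" by simp
  also have "\<dots> = x i" using x bx_lt[of i Q] by (auto simp: fs_def)
  finally show "x i = (\<Sum>J<Q. bp J x i)" by simp
qed

lemma sum_blocks: "(\<Sum>i<n Q. f i) = (\<Sum>J<Q. \<Sum>i\<in>blk n J. f i)"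
proof (induction Q)
  case 0
  then show ?case by (simp add: n0)
next
  case (Suc Q)
  have "{..<n (Suc Q)} = {..<n Q} \<union> blk n Q" using n_Suc[of Q] by (auto simp: blk_def)
  moreover have "{..<n Q} \<inter> blk n Q = {}" by (auto simp: blk_def)
  ultimately have "(\<Sum>i<n (Suc Q). f i) = (\<Sum>i<n Q. f i) + (\<Sum>i\<in>blk n Q. f i)"
    by (simp add: sum.union_disjoint)
  thus ?case using Suc by simp
qed

lemma L2_set_zero_out:
  assumes "finite Y" "X \<subseteq> Y" "\<And>i. i \<in> Y - X \<Longrightarrow> f i = 0"
  shows "L2_set f Y = L2_set f X"
  unfolding L2_set_def using assms by (intro arg_cong[where f=sqrt] sum.mono_neutral_right) auto

lemma blk_sub: "blk n J \<subseteq> {..<n (Suc J)}" by (auto simp: blk_def)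

lemma l2norm_bp: "l2norm (bp J x) = L2_set x (blk n J)"
proof -
  have "l2norm (bp J x) = L2_set (bp J x) {..<n (Suc J)}" by (rule l2norm_fs[OF fs_bp])
  also have "\<dots> = L2_set (bp J x) (blk n J)"
    by (rule L2_set_zero_out) (auto simp: blk_def bp_def blk_bx[symmetric])
  also have "\<dots> = L2_set x (blk n J)" by (rule L2_set_cong) (auto simp: bp_def blk_bx)
  finally show ?thesis .
qed

lemma l2norm_sq_blocks:
  assumes "fs (n Q) x"
  shows "(l2norm x)\<^sup>2 = (\<Sum>J<Q. (L2_set x (blk n J))\<^sup>2)"
  using l2norm_fs_sq[OF assms] sum_blocks[where Q=Q and f="\<lambda>i. (x i)\<^sup>2"] by (simp add: L2_set_sq)

lemma L2_blk_le: "fs N x \<Longrightarrow> L2_set x (blk n J) \<le> l2norm x"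
proof -
  assume x: "fs N x"
  let ?N = "max N (n (Suc J))"
  have "fs ?N x" using x by (rule fs_mono) simp
  hence "l2norm x = L2_set x {..<?N}" by (rule l2norm_fs)
  moreover have "L2_set x (blk n J) \<le> L2_set x {..<?N}"
    by (rule L2_set_subset) (auto simp: blk_def)
  ultimately show ?thesis by simp
qed

section \<open>A Schur test for finite sums\<close>

lemma schur_fin:
  fixes a eta e :: "nat \<Rightarrow> real"
  assumes a0: "\<And>t. 0 \<le> a t" and aS: "\<And>T. (\<Sum>t<T. a t) \<le> S"
    and eta0: "\<And>J. 0 \<le> eta J"
    and e: "\<And>I. I < Q \<Longrightarrow> 0 \<le> e I \<and> e I \<le> (\<Sum>J<Q. (if I \<le> J then a (J - I) else 0) * eta J)"
  shows "(\<Sum>I<Q. (e I)\<^sup>2) \<le> S\<^sup>2 * (\<Sum>J<Q. (eta J)\<^sup>2)"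
proof -
  define c where "c I J = (if I \<le> J then a (J - I) else 0)" for I J
  have c0: "0 \<le> c I J" for I J by (simp add: c_def a0)
  have S0: "0 \<le> S" using aS[of 0] by simp
  have rs: "(\<Sum>J<Q'. c I J) = (\<Sum>t<Q' - I. a t)" for I Q'
  proof (induction Q')
    case 0
    then show ?case by simp
  next
    case (Suc Q')
    show ?case
    proof (cases "I \<le> Q'")
      case True
      hence "Suc Q' - I = Suc (Q' - I)" by (simp add: Suc_diff_le)
      thus ?thesis using Suc True by (simp add: c_def)
    next
      case False
      hence "Suc Q' - I = Q' - I" by simp
      thus ?thesis using Suc False by (simp add: c_def)
    qed
  qed
  have rowsum: "(\<Sum>J<Q. c I J) \<le> S" for I
    using rs[of I Q] aS[of "Q - I"] by simp
  have colsum: "(\<Sum>I<Q. c I J) \<le> S" for J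
  proof -
    have "(\<Sum>I<Q. c I J) = (\<Sum>I<Q. if I \<in> {..<Suc J} then a (J - I) else 0)"
      by (rule sum.cong) (simp_all add: c_def)
    also have "\<dots> = (\<Sum>I\<in>{..<Q} \<inter> {..<Suc J}. a (J - I))"
      by (rule sum.inter_restrict[symmetric]) simp
    also have "\<dots> \<le> (\<Sum>I<Suc J. a (J - I))"
      by (rule sum_mono2) (simp_all add: a0)
    also have "(\<Sum>I<Suc J. a (J - I)) = (\<Sum>I<Suc J. a (Suc J - Suc I))" by simp
    also have "\<dots> = (\<Sum>I<Suc J. a I)" by (rule sum.nat_diff_reindex)
    also have "\<dots> \<le> S" by (rule aS)
    finally show ?thesis .
  qed
  have row: "(e I)\<^sup>2 \<le> S * (\<Sum>J<Q. c I J * (eta J)\<^sup>2)" if I: "I < Q" for I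
  proof -
    have "(e I)\<^sup>2 \<le> (\<Sum>J<Q. c I J * eta J)\<^sup>2"
      using e[OF I] by (intro power_mono) (auto simp: c_def)
    also have "(\<Sum>J<Q. c I J * eta J) = (\<Sum>J<Q. sqrt (c I J) * (sqrt (c I J) * eta J))"
      by (rule sum.cong) (auto simp: c0 mult.assoc[symmetric])
    also have "(\<dots>)\<^sup>2 \<le> (\<Sum>J<Q. (sqrt (c I J))\<^sup>2) * (\<Sum>J<Q. (sqrt (c I J) * eta J)\<^sup>2)"
      by (rule Cauchy_Schwarz_ineq_sum)
    also have "\<dots> = (\<Sum>J<Q. c I J) * (\<Sum>J<Q. c I J * (eta J)\<^sup>2)"
      by (simp add: c0 power_mult_distrib)
    also have "\<dots> \<le> S * (\<Sum>J<Q. c I J * (eta J)\<^sup>2)"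
      by (rule mult_right_mono[OF rowsum]) (auto intro: sum_nonneg simp: c0)
    finally show ?thesis .
  qed
  have dbl: "(\<Sum>I<Q. \<Sum>J<Q. c I J * (eta J)\<^sup>2) \<le> S * (\<Sum>J<Q. (eta J)\<^sup>2)"
  proof -
    have "(\<Sum>I<Q. \<Sum>J<Q. c I J * (eta J)\<^sup>2) = (\<Sum>J<Q. \<Sum>I<Q. c I J * (eta J)\<^sup>2)"
      by (rule sum.swap)
    also have "\<dots> = (\<Sum>J<Q. (eta J)\<^sup>2 * (\<Sum>I<Q. c I J))"
      by (rule sum.cong) (simp_all add: sum_distrib_left mult.commute)
    also have "\<dots> \<le> (\<Sum>J<Q. (eta J)\<^sup>2 * S)"
      by (rule sum_mono) (rule mult_left_mono[OF colsum], simp)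
    also have "\<dots> = S * (\<Sum>J<Q. (eta J)\<^sup>2)"
      by (simp add: sum_distrib_left mult.commute)
    finally show ?thesis .
  qed
  have "(\<Sum>I<Q. (e I)\<^sup>2) \<le> (\<Sum>I<Q. S * (\<Sum>J<Q. c I J * (eta J)\<^sup>2))"
    by (rule sum_mono) (rule row, simp)
  also have "\<dots> = S * (\<Sum>I<Q. \<Sum>J<Q. c I J * (eta J)\<^sup>2)"
    by (simp add: sum_distrib_left)
  also have "\<dots> \<le> S * (S * (\<Sum>J<Q. (eta J)\<^sup>2))"
    by (rule mult_left_mono[OF dbl S0])
  also have "\<dots> = S\<^sup>2 * (\<Sum>J<Q. (eta J)\<^sup>2)"
    by (simp add: power2_eq_square)
  finally show ?thesis .
qed

end

lemma natA: fixes t k b :: nat shows "t \<le> (k - 1) * b \<Longrightarrow> 0 < b \<Longrightarrow> k + t div b \<le> 2 * k"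
proof -
  assume a: "t \<le> (k - 1) * b" "0 < b"
  have "t div b \<le> ((k - 1) * b) div b" using a(1) by (rule div_le_mono)
  also have "\<dots> = k - 1" using a(2) by simp
  finally show ?thesis by simp
qed

lemma natB1: fixes t k b :: nat shows "(k - 1) * b < t \<Longrightarrow> 0 < b \<Longrightarrow> ((t - 1) div b) * b < t"
proof -
  assume a: "(k - 1) * b < t" "0 < b"
  have "((t - 1) div b) * b \<le> t - 1" by (rule div_times_less_eq_dividend)
  thus ?thesis using a by linarith
qed

lemma natB2: fixes t k b :: nat shows "(k - 1) * b < t \<Longrightarrow> 0 < b \<Longrightarrow> k \<le> (t - 1) div b + 1"
proof -
  assume a: "(k - 1) * b < t" "0 < b"
  hence "(k - 1) * b \<le> t - 1" by linarith
  hence "((k - 1) * b) div b \<le> (t - 1) div b" by (rule div_le_mono)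
  hence "k - 1 \<le> (t - 1) div b" using a(2) by simp
  thus ?thesis by linarith
qed

lemma natB3: fixes t k b :: nat shows "(k - 1) * b < t \<Longrightarrow> 0 < b \<Longrightarrow> t div b \<le> (t - 1) div b + 1"
proof -
  assume a: "(k - 1) * b < t" "0 < b"
  have md: "(t - 1) mod b < b" using a(2) by simp
  have dm: "(t - 1) div b * b + (t - 1) mod b = t - 1" by (rule div_mult_mod_eq)
  have e: "((t - 1) div b + 1) * b = (t - 1) div b * b + b" by (simp add: distrib_right)
  have "t - 1 < ((t - 1) div b + 1) * b" unfolding e using md dm by linarith
  hence "t \<le> ((t - 1) div b + 1) * b" by linarith
  hence "t div b \<le> (((t - 1) div b + 1) * b) div b" by (rule div_le_mono)
  thus ?thesis using a(2) by simp
qed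

lemma sum_div_group: "(\<Sum>t<b * m. f (t div b)) = (of_nat b :: real) * (\<Sum>j<m. f j)"
proof (induction m)
  case 0
  then show ?case by simp
next
  case (Suc m)
  have "{..<b * Suc m} = {..<b * m} \<union> {b * m..<b * m + b}" by auto
  moreover have "{..<b * m} \<inter> {b * m..<b * m + b} = {}" by auto
  ultimately have "(\<Sum>t<b * Suc m. f (t div b)) = (\<Sum>t<b * m. f (t div b)) + (\<Sum>t\<in>{b * m..<b * m + b}. f (t div b))"
    by (simp add: sum.union_disjoint)
  also have "(\<Sum>t\<in>{b * m..<b * m + b}. f (t div b)) = (\<Sum>t\<in>{b * m..<b * m + b}. f m)"
  proof (rule sum.cong)
    fix t assume t: "t \<in> {b * m..<b * m + b}"
    define s where "s = t - b * m"
    have ts: "t = s + m * b" and sb: "s < b" using t by (auto simp: s_def)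
    have "b \<noteq> 0" using sb by simp
    hence "t div b = s div b + m" unfolding ts by simp
    hence "t div b = m" using sb by simp
    thus "f (t div b) = f m" by simp
  qed simp
  also have "\<dots> = of_nat b * f m" by simp
  finally show ?case using Suc by (simp add: distrib_left)
qed

context setting begin

definition ev :: "nat \<Rightarrow> ivec" where "ev l = (\<lambda>i. if i = l then 1 else 0)"
definition r where "r = sqrt q"

lemma r_props: "0 \<le> r" "r < 1" "q = r\<^sup>2" "r \<le> 1"
  using q_props by (auto simp: r_def real_sqrt_lt_1_iff)

lemma b0pos': "0 < b0" using b0pos by simp

definition Vk :: "nat \<Rightarrow> imat" where "Vk k i l = Z (n (Suc (bx l))) k (ev l) i"

lemma ev_fs: "fs (n (Suc (bx l))) (ev l)"
  by (rule inblk_fs) (simp add: ev_def split: if_splits)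

lemma Vk_entry:
  assumes nz: "Vk k i l \<noteq> 0"
  shows "d i l \<le> real ((k - 1) * b0) \<and> bx l \<le> bx i + (k - 1) * b0 \<and> bx i \<le> bx l"
proof -
  from Z_supp[OF nz[unfolded Vk_def]] obtain j where j: "ev l j \<noteq> 0" "d i j \<le> real ((k - 1) * b0)"
    "bx j \<le> bx i + (k - 1) * b0" by blast
  have jl: "j = l" using j(1) by (simp add: ev_def split: if_splits)
  have "fs (n (Suc (bx l))) (Z (n (Suc (bx l))) k (ev l))" by (rule fs_Z[OF ev_fs])
  hence "i < n (Suc (bx l))" using nz unfolding Vk_def fs_def using not_le by blast
  hence "bx i < Suc (bx l)" using bx_lt by simp
  thus ?thesis using j jl by simp
qed

definition RB :: "nat \<Rightarrow> nat \<Rightarrow> nat" where "RB k i = n (Suc (bx i + k * b0))"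

lemma Vk_row: "Vk k i l \<noteq> 0 \<Longrightarrow> l < RB k i"
proof -
  assume "Vk k i l \<noteq> 0"
  hence "bx l \<le> bx i + (k - 1) * b0" using Vk_entry by blast
  moreover have "(k - 1) * b0 \<le> k * b0" by simp
  ultimately have "bx l < Suc (bx i + k * b0)" by linarith
  thus ?thesis unfolding RB_def using bx_lt by simp
qed

lemma Vk_mv: "mv (Vk k) x i = (\<Sum>l<RB k i. Vk k i l * x l)"
  unfolding mv_def by (rule suminf_fs(1)) (use Vk_row in force)

lemma Vk_summable: "summable (\<lambda>l. Vk k i l * x l)"
  by (rule suminf_fs(2)[of "RB k i"]) (use Vk_row in force)

lemma Vk_blk:
  assumes y: "\<And>l. y l \<noteq> 0 \<Longrightarrow> bx l = J"
  shows "mv (Vk k) y = Z (n (Suc J)) k y"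
proof -
  let ?N = "n (Suc J)"
  have yf: "fs ?N y" by (rule inblk_fs[OF y])
  have "Z ?N k y = (\<lambda>i. \<Sum>l\<in>{..<?N}. y l * Z ?N k (\<lambda>j. if j = l then 1 else 0) i)"
    by (rule lin_eq_sum_basis[OF lin_Z]) (use yf in \<open>auto simp: fs_def\<close>)
  moreover have "mv (Vk k) y = (\<lambda>i. \<Sum>l<?N. Vk k i l * y l)" by (rule ext) (rule mv_fs[OF yf])
  moreover have "Vk k i l * y l = y l * Z ?N k (\<lambda>j. if j = l then 1 else 0) i" for i l
  proof (cases "y l = 0")
    case True then show ?thesis by simp
  next
    case False then have "bx l = J" using y by simp
    then show ?thesis by (simp add: Vk_def ev_def)
  qed
  ultimately show ?thesis by simp
qed

lemma Uinv_A:
  assumes y: "\<And>l. y l \<noteq> 0 \<Longrightarrow> bx l = J"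
  shows "A (n (Suc J)) (mv Uinv y) = y"
proof -
  let ?N = "n (Suc J)"
  have vf: "fs ?N (mv Uinv y)" by (rule MUinv(1)[OF y])
  have "A ?N (mv Uinv y) = (\<lambda>i. if i < ?N then mv M (mv Uinv y) i else 0)" by (rule A_fs[OF vf])
  also have "\<dots> = (\<lambda>i. if i < ?N then y i else 0)" using MUinv(2)[OF y] by (simp add: fun_eq_iff)
  also have "\<dots> = y" using inblk_fs[OF y] by (simp add: fun_eq_iff fs_def)
  finally show ?thesis .
qed

lemma Uinv_split:
  assumes y: "\<And>l. y l \<noteq> 0 \<Longrightarrow> bx l = J"
  shows "mv Uinv y i = Z (n (Suc J)) k y i + (R (n (Suc J)) ^^ k) (mv Uinv y) i"
  using Z_A[of "n (Suc J)" k "mv Uinv y"] Uinv_A[OF y] by (simp add: fun_eq_iff)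

lemma err_blk:
  assumes y: "\<And>l. y l \<noteq> 0 \<Longrightarrow> bx l = J"
  shows "mv Uinv y i - mv (Vk k) y i = (R (n (Suc J)) ^^ k) (mv Uinv y) i"
  using Uinv_split[OF y, where i=i and k=k] Vk_blk[OF y, where k=k] by simp

lemma blk_err_bound:
  assumes y: "\<And>l. y l \<noteq> 0 \<Longrightarrow> bx l = J" and IJ: "I \<le> J"
  shows "L2_set (\<lambda>i. mv Uinv y i - mv (Vk k) y i) (blk n I) \<le> gam * r ^ k * r ^ ((J - I) div b0) * l2norm y"
proof -
  let ?N = "n (Suc J)"
  define v where "v = mv Uinv y"
  define t where "t = J - I"
  have yf: "fs ?N y" by (rule inblk_fs[OF y])
  have vf: "fs ?N v" unfolding v_def by (rule MUinv(1)[OF y])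
  have vn: "l2norm v \<le> gam * l2norm y" unfolding v_def using Uinv_norm[OF l2_fs[OF yf]] by simp
  have yn: "0 \<le> l2norm y" by (rule l2norm_nonneg[OF l2_fs[OF yf]])
  have L: "L2_set (\<lambda>i. mv Uinv y i - mv (Vk k) y i) (blk n I) = L2_set ((R ?N ^^ k) v) (blk n I)"
    by (rule L2_set_cong) (simp_all add: err_blk[OF y] v_def)
  have key: "L2_set (\<lambda>i. mv Uinv y i - mv (Vk k) y i) (blk n I) \<le> q ^ m * (gam * l2norm y)"
    if mk: "k \<le> m" and IJm: "I + (m - 1) * b0 < J \<or> m = k" for m
  proof (cases "m = k")
    case True
    have "L2_set ((R ?N ^^ k) v) (blk n I) \<le> l2norm ((R ?N ^^ k) v)" by (rule L2_blk_le[OF fs_Rp[OF vf]])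
    also have "\<dots> \<le> q ^ k * l2norm v" by (rule Rp_contr[OF vf])
    also have "\<dots> \<le> q ^ k * (gam * l2norm y)" using vn q_props(1) by (simp add: mult_left_mono)
    finally show ?thesis using L True by simp
  next
    case False
    hence Im: "I + (m - 1) * b0 < J" using IJm by simp
    have Ik: "I + (k - 1) * b0 < J"
    proof -
      have "(k - 1) * b0 \<le> (m - 1) * b0" using mk by (intro mult_right_mono) auto
      thus ?thesis using Im by linarith
    qed
    have Z0: "Z ?N m' y i = 0" if "i \<in> blk n I" "I + (m' - 1) * b0 < J" for i m'
    proof (rule ccontr)
      assume "Z ?N m' y i \<noteq> 0"
      from Z_supp[OF this] obtain j where "y j \<noteq> 0" "bx j \<le> bx i + (m' - 1) * b0" by blast
      hence "J \<le> I + (m' - 1) * b0" using y that(1) blk_bx by force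
      thus False using that(2) by simp
    qed
    have "L2_set ((R ?N ^^ k) v) (blk n I) = L2_set ((R ?N ^^ m) v) (blk n I)"
    proof (rule L2_set_cong)
      fix i assume i: "i \<in> blk n I"
      have "(R ?N ^^ k) v i = v i" using Uinv_split[OF y, where i=i and k=k] Z0[OF i Ik] by (simp add: v_def)
      also have "\<dots> = (R ?N ^^ m) v i" using Uinv_split[OF y, where i=i and k=m] Z0[OF i Im] by (simp add: v_def)
      finally show "(R ?N ^^ k) v i = (R ?N ^^ m) v i" .
    qed simp
    also have "\<dots> \<le> l2norm ((R ?N ^^ m) v)" by (rule L2_blk_le[OF fs_Rp[OF vf]])
    also have "\<dots> \<le> q ^ m * l2norm v" by (rule Rp_contr[OF vf])
    also have "\<dots> \<le> q ^ m * (gam * l2norm y)" using vn q_props(1) by (simp add: mult_left_mono)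
    finally show ?thesis using L by simp
  qed
  obtain m where m: "k \<le> m" "I + (m - 1) * b0 < J \<or> m = k" "k + t div b0 \<le> 2 * m"
  proof (cases "t \<le> (k - 1) * b0")
    case True
    show ?thesis by (rule that[of k]) (use natA[OF True b0pos'] in auto)
  next
    case False
    hence F: "(k - 1) * b0 < t" by simp
    define m where "m = (t - 1) div b0 + 1"
    have "k \<le> m" unfolding m_def by (rule natB2[OF F b0pos'])
    moreover have "(m - 1) * b0 < t" unfolding m_def using natB1[OF F b0pos'] by simp
    hence "I + (m - 1) * b0 < J" using IJ by (simp add: t_def)
    moreover have "t div b0 \<le> m" unfolding m_def by (rule natB3[OF F b0pos'])
    ultimately show ?thesis using that[of m] by simp
  qed
  have "L2_set (\<lambda>i. mv Uinv y i - mv (Vk k) y i) (blk n I) \<le> q ^ m * (gam * l2norm y)"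
    by (rule key[OF m(1,2)])
  also have "q ^ m = r ^ (2 * m)" by (simp add: r_props(3) power_mult)
  also have "r ^ (2 * m) \<le> r ^ (k + t div b0)"
    by (rule power_decreasing[OF m(3) r_props(1) r_props(4)])
  hence "r ^ (2 * m) * (gam * l2norm y) \<le> r ^ (k + t div b0) * (gam * l2norm y)"
    using gam_nonneg yn by (intro mult_right_mono) auto
  finally show ?thesis by (simp add: t_def power_add algebra_simps)
qed

end

lemma l2_diff: "l2 x \<Longrightarrow> l2 y \<Longrightarrow> l2 (\<lambda>i. x i - y i)"
proof -
  assume "l2 x" "l2 y"
  hence s: "summable (\<lambda>i. 2 * (x i)\<^sup>2 + 2 * (y i)\<^sup>2)" unfolding l2_def
    by (intro summable_add summable_mult)
  have "norm ((x i - y i)\<^sup>2) \<le> 2 * (x i)\<^sup>2 + 2 * (y i)\<^sup>2" for i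
  proof -
    have "0 \<le> (x i + y i)\<^sup>2" by simp
    hence "(x i - y i)\<^sup>2 \<le> 2 * (x i)\<^sup>2 + 2 * (y i)\<^sup>2" by (simp add: power2_eq_square algebra_simps)
    moreover have "norm ((x i - y i)\<^sup>2) = (x i - y i)\<^sup>2" by simp
    ultimately show ?thesis by simp
  qed
  thus ?thesis unfolding l2_def by (rule summable_comparison_test'[OF s])
qed

lemma fs_diff: "fs N a \<Longrightarrow> fs N b \<Longrightarrow> fs N (\<lambda>i. a i - b i)"
  by (simp add: fs_def)

lemma l2norm_diff_fs: "fs N a \<Longrightarrow> fs N b \<Longrightarrow> l2norm (\<lambda>i. a i - b i) \<le> l2norm a + l2norm b"
proof -
  assume a: "fs N a" and b: "fs N b"
  have "l2norm (\<lambda>i. a i - b i) = L2_set (\<lambda>i. a i - b i) {..<N}" by (rule l2norm_fs[OF fs_diff[OF a b]])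
  also have "\<dots> \<le> L2_set a {..<N} + L2_set b {..<N}" by (rule L2_set_diff_le)
  finally show ?thesis using l2norm_fs[OF a] l2norm_fs[OF b] by simp
qed

lemma abs_le_l2norm: "fs N v \<Longrightarrow> \<bar>v i\<bar> \<le> l2norm v"
proof -
  assume v: "fs N v"
  let ?N = "max N (Suc i)"
  have "fs ?N v" using v by (rule fs_mono) simp
  hence "l2norm v = L2_set v {..<?N}" by (rule l2norm_fs)
  moreover have "\<bar>v i\<bar> \<le> L2_set v {..<?N}" by (rule abs_le_L2_set) auto
  ultimately show ?thesis by simp
qed

context setting begin

definition dk :: "nat \<Rightarrow> real" where "dk k = gam * r ^ k * (real b0 / (1 - r))"

lemma dk_nonneg: "0 \<le> dk k"
  using gam_nonneg r_props by (simp add: dk_def)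

lemma geo_div: "(\<Sum>t<T. r ^ (t div b0)) \<le> real b0 / (1 - r)"
proof -
  have "(\<Sum>t<T. r ^ (t div b0)) \<le> (\<Sum>t<b0 * T. r ^ (t div b0))"
  proof (rule sum_mono2)
    show "{..<T} \<subseteq> {..<b0 * T}" using b0pos by auto
  qed (simp_all add: r_props(1))
  also have "\<dots> = real b0 * (\<Sum>j<T. r ^ j)" by (rule sum_div_group)
  also have "(\<Sum>j<T. r ^ j) \<le> 1 / (1 - r)"
  proof -
    have "r \<noteq> 1" using r_props by simp
    hence "(\<Sum>j<T. r ^ j) = (1 - r ^ T) / (1 - r)" by (simp add: sum_gp_strict)
    also have "\<dots> \<le> 1 / (1 - r)" using r_props by (intro divide_right_mono) auto
    finally show ?thesis .
  qed
  hence "real b0 * (\<Sum>j<T. r ^ j) \<le> real b0 * (1 / (1 - r))" by (rule mult_left_mono) simp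
  finally show ?thesis by simp
qed

lemma Vk_fs: assumes y: "fs (n K) y" shows "fs (n K) (mv (Vk k) y)"
  unfolding fs_def
proof (intro allI impI)
  fix i assume i: "n K \<le> i"
  have zz: "Vk k i l * y l = 0" if "l < n K" for l
  proof -
    have "bx l < K" using that bx_lt by simp
    moreover have "\<not> bx i < K" using i bx_lt[of i K] by simp
    ultimately have "Vk k i l = 0" using Vk_entry[of k i l] by fastforce
    thus ?thesis by simp
  qed
  have "mv (Vk k) y i = (\<Sum>l<n K. Vk k i l * y l)" by (rule mv_fs[OF y])
  also have "\<dots> = 0" by (rule sum.neutral) (simp add: zz)
  finally show "mv (Vk k) y i = 0" .
qed

lemma mv_bp_sum:
  assumes y: "fs (n Q) y"
  shows "mv T y = (\<lambda>i. \<Sum>J<Q. mv T (bp J y) i)"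
proof -
  have bpfs: "fs (n Q) (bp J y)" if "J \<in> {..<Q}" for J
    using fs_bp[of J y] n_mono[of "Suc J" Q] that by (auto intro: fs_mono)
  have "mv T (\<lambda>i. \<Sum>J\<in>{..<Q}. bp J y i) = (\<lambda>i. \<Sum>J\<in>{..<Q}. mv T (bp J y) i)"
    by (rule mv_sum[OF _ bpfs]) simp_all
  thus ?thesis unfolding sum_bp[OF y, symmetric] .
qed

lemma err_fin:
  assumes y: "fs (n Q) y"
  shows "l2norm (\<lambda>i. mv Uinv y i - mv (Vk k) y i) \<le> dk k * l2norm y"
proof -
  define w where "w J = (\<lambda>i. mv Uinv (bp J y) i - mv (Vk k) (bp J y) i)" for J
  define e where "e = (\<lambda>i. mv Uinv y i - mv (Vk k) y i)"
  define a where "a t = gam * r ^ k * r ^ (t div b0)" for t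
  define eta where "eta J = L2_set y (blk n J)" for J
  have e_sum: "e = (\<lambda>i. \<Sum>J<Q. w J i)"
    unfolding e_def w_def mv_bp_sum[OF y, of Uinv] mv_bp_sum[OF y, of "Vk k"]
    by (simp add: sum_subtractf)
  have w_eq: "w J = (R (n (Suc J)) ^^ k) (mv Uinv (bp J y))" for J
    unfolding w_def by (rule ext) (rule err_blk[OF bp_supp])
  have wfs: "fs (n (Suc J)) (w J)" for J
    unfolding w_eq by (rule fs_Rp[OF MUinv(1)[OF bp_supp]])
  have efs: "fs (n Q) e"
  proof -
    have "fs (n Q) (w J)" if "J < Q" for J
      using wfs[of J] n_mono[of "Suc J" Q] that by (auto intro: fs_mono)
    thus ?thesis unfolding e_sum fs_def by (auto intro!: sum.neutral simp: fs_def)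
  qed
  have w0: "L2_set (w J) (blk n I) = 0" if "J < I" for I J
  proof (rule L2_set_0', intro ballI)
    fix i assume "i \<in> blk n I"
    hence "bx i = I" by (simp add: blk_bx)
    hence "\<not> i < n (Suc J)" using that bx_lt by simp
    thus "w J i = 0" using wfs[of J] by (simp add: fs_def)
  qed
  have wb: "L2_set (w J) (blk n I) \<le> a (J - I) * eta J" if "I \<le> J" for I J
  proof -
    have "L2_set (w J) (blk n I) \<le> gam * r ^ k * r ^ ((J - I) div b0) * l2norm (bp J y)"
      unfolding w_def by (rule blk_err_bound[OF bp_supp that])
    thus ?thesis by (simp add: a_def eta_def l2norm_bp)
  qed
  have a0: "0 \<le> a t" for t using gam_nonneg r_props by (simp add: a_def)
  have aS: "(\<Sum>t<T. a t) \<le> dk k" for T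
  proof -
    have "(\<Sum>t<T. a t) = gam * r ^ k * (\<Sum>t<T. r ^ (t div b0))" by (simp add: a_def sum_distrib_left)
    also have "\<dots> \<le> gam * r ^ k * (real b0 / (1 - r))"
      using gam_nonneg r_props by (intro mult_left_mono geo_div) auto
    finally show ?thesis by (simp add: dk_def)
  qed
  have eb: "0 \<le> L2_set e (blk n I) \<and> L2_set e (blk n I) \<le> (\<Sum>J<Q. (if I \<le> J then a (J - I) else 0) * eta J)"
    if "I < Q" for I
  proof
    show "0 \<le> L2_set e (blk n I)" by simp
    have "L2_set e (blk n I) \<le> (\<Sum>J<Q. L2_set (w J) (blk n I))"
      unfolding e_sum by (rule L2_set_sum_le) simp
    also have "\<dots> \<le> (\<Sum>J<Q. (if I \<le> J then a (J - I) else 0) * eta J)"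
    proof (rule sum_mono)
      fix J assume "J \<in> {..<Q}"
      show "L2_set (w J) (blk n I) \<le> (if I \<le> J then a (J - I) else 0) * eta J"
        using wb[of I J] w0[of J I] by (cases "I \<le> J") auto
    qed
    finally show "L2_set e (blk n I) \<le> (\<Sum>J<Q. (if I \<le> J then a (J - I) else 0) * eta J)" .
  qed
  have "(\<Sum>I<Q. (L2_set e (blk n I))\<^sup>2) \<le> (dk k)\<^sup>2 * (\<Sum>J<Q. (eta J)\<^sup>2)"
    by (rule schur_fin[OF a0 aS _ eb]) (simp_all add: eta_def)
  hence "(l2norm e)\<^sup>2 \<le> (dk k)\<^sup>2 * (l2norm y)\<^sup>2"
    using l2norm_sq_blocks[OF efs] l2norm_sq_blocks[OF y] by (simp add: eta_def)
  hence "(l2norm e)\<^sup>2 \<le> (dk k * l2norm y)\<^sup>2" by (simp add: power_mult_distrib)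
  hence "l2norm e \<le> dk k * l2norm y"
    by (rule power2_le_imp_le) (use dk_nonneg l2norm_nonneg[OF l2_fs[OF y]] in auto)
  thus ?thesis by (simp add: e_def)
qed

lemma E_rows: "l2 x \<Longrightarrow> summable (\<lambda>j. mdiff Uinv (Vk k) i j * x j)"
proof -
  assume x: "l2 x"
  have "summable (\<lambda>j. Uinv i j * x j - Vk k i j * x j)"
    by (rule summable_diff[OF bounded_l2_summable[OF bUinv x] Vk_summable])
  thus ?thesis by (simp add: mdiff_def algebra_simps)
qed

lemma E_restr:
  assumes y: "fs N y"
  shows "mv (mdiff Uinv (Vk k)) y = (\<lambda>i. mv Uinv y i - mv (Vk k) y i)"
  by (rule mdiff_mv) (simp_all add: mv_fs_summable[OF y])

lemma E_bound:
  assumes x: "l2 x"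
  shows "l2 (mv (mdiff Uinv (Vk k)) x) \<and> l2norm (mv (mdiff Uinv (Vk k)) x) \<le> dk k * l2norm x"
proof (rule bound_from_restr[OF x E_rows[OF x]])
  fix N
  have yf: "fs (n N) (restr N x)" using fs_restr[of N x] nK[of N] by (rule fs_mono)
  have fs2: "fs (n N) (\<lambda>i. mv Uinv (restr N x) i - mv (Vk k) (restr N x) i)"
    by (rule fs_diff[OF Uinv_fs[OF yf] Vk_fs[OF yf]])
  have "l2norm (mv (mdiff Uinv (Vk k)) (restr N x)) \<le> dk k * l2norm (restr N x)"
    unfolding E_restr[OF yf] by (rule err_fin[OF yf])
  also have "\<dots> \<le> dk k * l2norm x" by (rule mult_left_mono[OF l2norm_restr[OF x] dk_nonneg])
  finally show "l2 (mv (mdiff Uinv (Vk k)) (restr N x)) \<and>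
      l2norm (mv (mdiff Uinv (Vk k)) (restr N x)) \<le> dk k * l2norm x"
    unfolding E_restr[OF yf] using l2_fs[OF fs2] by (simp add: E_restr[OF yf])
qed

lemma Vk_bound:
  assumes x: "l2 x"
  shows "l2 (mv (Vk k) x) \<and> l2norm (mv (Vk k) x) \<le> (gam + dk k) * l2norm x"
proof (rule bound_from_restr[OF x Vk_summable])
  fix N
  define y where "y = restr N x"
  have yf: "fs (n N) y" using fs_restr[of N x] nK[of N] unfolding y_def by (rule fs_mono)
  have l2y: "l2 y" by (rule l2_fs[OF yf])
  have ufs: "fs (n N) (mv Uinv y)" by (rule Uinv_fs[OF yf])
  have efs: "fs (n N) (\<lambda>i. mv Uinv y i - mv (Vk k) y i)" by (rule fs_diff[OF ufs Vk_fs[OF yf]])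
  have eq: "mv (Vk k) y = (\<lambda>i. mv Uinv y i - (mv Uinv y i - mv (Vk k) y i))" by simp
  have "l2norm (mv (Vk k) y) \<le> l2norm (mv Uinv y) + l2norm (\<lambda>i. mv Uinv y i - mv (Vk k) y i)"
    by (subst eq, rule l2norm_diff_fs[OF ufs efs])
  also have "\<dots> \<le> gam * l2norm y + dk k * l2norm y"
    using Uinv_norm[OF l2y] err_fin[OF yf, of k] by simp
  also have "\<dots> = (gam + dk k) * l2norm y" by (simp add: distrib_right)
  also have "\<dots> \<le> (gam + dk k) * l2norm x" unfolding y_def
    using gam_nonneg dk_nonneg by (intro mult_left_mono l2norm_restr[OF x]) auto
  finally show "l2 (mv (Vk k) (restr N x)) \<and> l2norm (mv (Vk k) (restr N x)) \<le> (gam + dk k) * l2norm x"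
    using l2_fs[OF Vk_fs[OF yf]] by (simp add: y_def)
qed

lemma Vk_bounded: "bounded_l2 (Vk k)"
proof -
  have "\<forall>x. l2 x \<longrightarrow> (\<forall>i. summable (\<lambda>j. Vk k i j * x j)) \<and> l2 (mv (Vk k) x)"
    using Vk_bound Vk_summable by blast
  moreover have "\<forall>x. l2 x \<longrightarrow> l2norm (mv (Vk k) x) \<le> (gam + dk k) * l2norm x"
    using Vk_bound by blast
  ultimately show ?thesis unfolding bounded_l2_def by blast
qed

lemma E_bounded: "bounded_l2 (mdiff Uinv (Vk k))"
proof -
  have "\<forall>x. l2 x \<longrightarrow> (\<forall>i. summable (\<lambda>j. mdiff Uinv (Vk k) i j * x j)) \<and> l2 (mv (mdiff Uinv (Vk k)) x)"
    using E_bound E_rows by blast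
  moreover have "\<forall>x. l2 x \<longrightarrow> l2norm (mv (mdiff Uinv (Vk k)) x) \<le> dk k * l2norm x"
    using E_bound by blast
  ultimately show ?thesis unfolding bounded_l2_def by blast
qed

lemma Vk_opnorm: "opnorm2 (Vk k) \<le> gam + dk k"
  by (rule opnorm_le) (use gam_nonneg dk_nonneg Vk_bound in auto)

lemma E_opnorm: "opnorm2 (mdiff Uinv (Vk k)) \<le> dk k"
  by (rule opnorm_le) (use dk_nonneg E_bound in auto)

lemma U_lower: "l2 v \<Longrightarrow> l2norm (mv U v) \<le> bU * l2norm v" using U_norm by blast

lemma Vk_lower:
  assumes small: "bU * dk k \<le> 1/2" and x: "fs N x"
  shows "l2norm x \<le> 2 * bU * l2norm (mv (Vk k) x)"
proof -
  have xf: "fs (n N) x" using x nK[of N] by (rule fs_mono)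
  define u where "u = mv Uinv x"
  have ufs: "fs (n N) u" unfolding u_def by (rule Uinv_fs[OF xf])
  have vfs: "fs (n N) (mv (Vk k) x)" by (rule Vk_fs[OF xf])
  have efs: "fs (n N) (\<lambda>i. u i - mv (Vk k) x i)" by (rule fs_diff[OF ufs vfs])
  have "x = mv U u" unfolding u_def using UUinv(1)[OF l2_fs[OF xf]] by simp
  hence "l2norm x \<le> bU * l2norm u" using U_norm[OF l2_fs[OF ufs]] by simp
  also have "l2norm u \<le> l2norm (mv (Vk k) x) + l2norm (\<lambda>i. u i - mv (Vk k) x i)"
  proof -
    have eq: "u = (\<lambda>i. mv (Vk k) x i - (- (u i - mv (Vk k) x i)))" by simp
    have "fs (n N) (\<lambda>i. - (u i - mv (Vk k) x i))" using efs by (simp add: fs_def)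
    hence "l2norm u \<le> l2norm (mv (Vk k) x) + l2norm (\<lambda>i. - (u i - mv (Vk k) x i))"
      by (subst eq, rule l2norm_diff_fs[OF vfs])
    moreover have "l2norm (\<lambda>i. - (u i - mv (Vk k) x i)) = l2norm (\<lambda>i. u i - mv (Vk k) x i)"
      by (simp add: l2norm_def power2_commute)
    ultimately show ?thesis by simp
  qed
  also have "l2norm (\<lambda>i. u i - mv (Vk k) x i) \<le> dk k * l2norm x"
    unfolding u_def by (rule err_fin[OF xf])
  finally have "l2norm x \<le> bU * (l2norm (mv (Vk k) x) + dk k * l2norm x)"
    using bU_pos by (simp add: mult_left_mono)
  hence "l2norm x \<le> bU * l2norm (mv (Vk k) x) + (bU * dk k) * l2norm x" by (simp add: algebra_simps)
  moreover have "(bU * dk k) * l2norm x \<le> 1/2 * l2norm x"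
    by (rule mult_right_mono[OF small l2norm_nonneg[OF l2_fs[OF xf]]])
  ultimately show ?thesis by linarith
qed

lemma Vk_inj:
  assumes small: "bU * dk k \<le> 1/2" and x: "l2 x" and z: "mv (Vk k) x = (\<lambda>i. 0)"
  shows "x = (\<lambda>i. 0)"
proof -
  have "mv (mdiff Uinv (Vk k)) x = (\<lambda>i. mv Uinv x i - mv (Vk k) x i)"
    by (rule mdiff_mv[OF bounded_l2_summable[OF bUinv x] Vk_summable])
  hence Ex: "mv (mdiff Uinv (Vk k)) x = mv Uinv x" using z by simp
  have "l2norm x = l2norm (mv U (mv Uinv x))" using UUinv(1)[OF x] by simp
  also have "\<dots> \<le> bU * l2norm (mv Uinv x)" using U_norm Uinv_norm[OF x] by blast
  also have "\<dots> \<le> bU * (dk k * l2norm x)"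
    using E_bound[OF x, of k] Ex bU_pos by (simp add: mult_left_mono)
  also have "\<dots> \<le> 1/2 * l2norm x"
    using mult_right_mono[OF small l2norm_nonneg[OF x]] by (simp add: mult.assoc)
  finally have "l2norm x = 0" using l2norm_nonneg[OF x] by simp
  thus ?thesis using l2_zero_iff[OF x] by auto
qed

end

context setting begin

definition Wc :: "nat \<Rightarrow> nat \<Rightarrow> ivec" where
  "Wc k l = (SOME x. fs (n (Suc (bx l))) x \<and> mv (Vk k) x = ev l)"

definition W :: "nat \<Rightarrow> imat" where "W k i l = Wc k l i"

lemma Wc:
  assumes small: "bU * dk k \<le> 1/2"
  shows "fs (n (Suc (bx l))) (Wc k l) \<and> mv (Vk k) (Wc k l) = ev l"
proof -
  let ?N = "n (Suc (bx l))"
  have inj: "\<forall>i<?N. x i = 0" if xf: "fs ?N x" and h: "\<forall>i<?N. (\<Sum>j<?N. Vk k i j * x j) = 0" for x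
  proof -
    have z: "mv (Vk k) x = (\<lambda>i. 0)"
    proof (rule ext)
      fix i show "mv (Vk k) x i = 0"
      proof (cases "i < ?N")
        case True thus ?thesis using h mv_fs[OF xf, of "Vk k" i] by simp
      next
        case False thus ?thesis using Vk_fs[OF xf, of k] by (simp add: fs_def)
      qed
    qed
    have "l2norm x \<le> 2 * bU * l2norm (mv (Vk k) x)" by (rule Vk_lower[OF small xf])
    hence "l2norm x \<le> 0" unfolding z by (simp add: l2norm_def)
    hence "l2norm x = 0" using l2norm_nonneg[OF l2_fs[OF xf]] by simp
    thus ?thesis using l2_zero_iff[OF l2_fs[OF xf]] by auto
  qed
  obtain x where x: "fs ?N x" "\<forall>i<?N. (\<Sum>j<?N. Vk k i j * x j) = ev l i"
    using fin_surj[of ?N "Vk k" "ev l"] inj by blast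
  have "mv (Vk k) x = ev l"
  proof (rule ext)
    fix i show "mv (Vk k) x i = ev l i"
    proof (cases "i < ?N")
      case True thus ?thesis using x mv_fs[OF x(1), of "Vk k" i] by simp
    next
      case False
      moreover have "l < ?N" using bx_lt by simp
      ultimately have "ev l i = 0" by (auto simp: ev_def)
      thus ?thesis using Vk_fs[OF x(1), of k] False by (simp add: fs_def)
    qed
  qed
  hence ex: "\<exists>x. fs ?N x \<and> mv (Vk k) x = ev l" using x(1) by blast
  show ?thesis unfolding Wc_def by (rule someI_ex[OF ex])
qed

lemma W_fin:
  assumes small: "bU * dk k \<le> 1/2" and y: "fs (n Q) y"
  shows "fs (n Q) (mv (W k) y)" and "mv (Vk k) (mv (W k) y) = y"
proof -
  have m: "mv (W k) y = (\<lambda>i. \<Sum>l<n Q. y l * Wc k l i)"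
    by (rule ext) (simp add: mv_fs[OF y] W_def mult.commute)
  have cfs: "fs (n Q) (\<lambda>i. y l * Wc k l i)" if "l \<in> {..<n Q}" for l
  proof (cases "y l = 0")
    case True thus ?thesis by (simp add: fs_def)
  next
    case False
    have "l < n Q" using that by simp
    hence "Suc (bx l) \<le> Q" using bx_lt by simp
    hence "fs (n Q) (Wc k l)" using Wc[OF small, of l] n_mono by (blast intro: fs_mono)
    thus ?thesis by (simp add: fs_def)
  qed
  show "fs (n Q) (mv (W k) y)" unfolding m using cfs by (auto simp: fs_def intro!: sum.neutral)
  have "mv (Vk k) (mv (W k) y) = (\<lambda>i. \<Sum>l<n Q. mv (Vk k) (\<lambda>i. y l * Wc k l i) i)"
    unfolding m by (rule mv_sum[OF _ cfs]) simp_all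
  also have "\<dots> = (\<lambda>i. \<Sum>l<n Q. y l * ev l i)"
  proof (rule ext, rule sum.cong)
    fix i l assume "l \<in> {..<n Q}"
    have "fs (n (Suc (bx l))) (Wc k l)" using Wc[OF small] by blast
    hence "mv (Vk k) (\<lambda>i. y l * Wc k l i) = (\<lambda>i. y l * mv (Vk k) (Wc k l) i)" by (rule mv_scale_fs)
    thus "mv (Vk k) (\<lambda>i. y l * Wc k l i) i = y l * ev l i" using Wc[OF small, of l] by simp
  qed simp
  also have "\<dots> = y"
  proof (rule ext)
    fix i
    have "(\<Sum>l<n Q. y l * ev l i) = (\<Sum>l<n Q. if l = i then y i else 0)"
      by (rule sum.cong) (auto simp: ev_def)
    also have "\<dots> = y i" using y by (auto simp: fs_def)
    finally show "(\<Sum>l<n Q. y l * ev l i) = y i" .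
  qed
  finally show "mv (Vk k) (mv (W k) y) = y" .
qed

lemma W_fin_bound:
  assumes small: "bU * dk k \<le> 1/2" and y: "fs (n Q) y"
  shows "l2norm (mv (W k) y) \<le> 2 * bU * l2norm y"
  using Vk_lower[OF small W_fin(1)[OF small y]] W_fin(2)[OF small y] by simp

lemma W_row:
  assumes small: "bU * dk k \<le> 1/2"
  shows "l2 (\<lambda>l. W k i l)"
proof -
  have part: "(\<Sum>l<P. (W k i l)\<^sup>2) \<le> (2 * bU)\<^sup>2" for P
  proof -
    define y where "y = restr P (\<lambda>l. W k i l)"
    define s where "s = (\<Sum>l<P. (W k i l)\<^sup>2)"
    have yP: "fs P y" by (simp add: y_def)
    have yf: "fs (n P) y" using yP nK[of P] by (rule fs_mono)
    have s0: "0 \<le> s" by (simp add: s_def sum_nonneg)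
    have "mv (W k) y i = (\<Sum>l<P. W k i l * y l)" by (rule mv_fs[OF yP])
    also have "\<dots> = s" by (simp add: s_def y_def restr_def power2_eq_square)
    finally have e1: "mv (W k) y i = s" .
    have "l2norm y = L2_set y {..<P}" by (rule l2norm_fs[OF yP])
    also have "\<dots> = sqrt s" by (simp add: L2_set_def s_def y_def restr_def)
    finally have ny: "l2norm y = sqrt s" .
    have "s \<le> \<bar>mv (W k) y i\<bar>" using e1 by simp
    also have "\<dots> \<le> l2norm (mv (W k) y)" by (rule abs_le_l2norm[OF W_fin(1)[OF small yf]])
    also have "\<dots> \<le> 2 * bU * sqrt s" using W_fin_bound[OF small yf] ny by simp
    finally have ss: "s \<le> 2 * bU * sqrt s" .
    have "sqrt s \<le> 2 * bU"
    proof (cases "s = 0")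
      case True thus ?thesis using bU_pos by simp
    next
      case False
      hence sp: "0 < sqrt s" using s0 by simp
      have "sqrt s * sqrt s \<le> (2 * bU) * sqrt s" using ss s0 by simp
      thus ?thesis using sp by (rule mult_right_le_imp_le)
    qed
    hence "(sqrt s)\<^sup>2 \<le> (2 * bU)\<^sup>2" by (rule power_mono) (simp add: s0)
    thus ?thesis using s0 by (simp add: s_def)
  qed
  show ?thesis unfolding l2_def by (rule summableI_nonneg_bounded[OF _ part]) simp
qed

lemma W_summable:
  assumes small: "bU * dk k \<le> 1/2" and x: "l2 x"
  shows "summable (\<lambda>l. W k i l * x l)"
  by (rule l2_mult_summable[OF W_row[OF small] x])

lemma W_bound:
  assumes small: "bU * dk k \<le> 1/2" and x: "l2 x"
  shows "l2 (mv (W k) x) \<and> l2norm (mv (W k) x) \<le> 2 * bU * l2norm x"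
proof (rule bound_from_restr[OF x W_summable[OF small x]])
  fix N
  have yf: "fs (n N) (restr N x)" using fs_restr[of N x] nK[of N] by (rule fs_mono)
  have "l2norm (mv (W k) (restr N x)) \<le> 2 * bU * l2norm (restr N x)" by (rule W_fin_bound[OF small yf])
  also have "\<dots> \<le> 2 * bU * l2norm x" using bU_pos by (intro mult_left_mono l2norm_restr[OF x]) auto
  finally show "l2 (mv (W k) (restr N x)) \<and> l2norm (mv (W k) (restr N x)) \<le> 2 * bU * l2norm x"
    using l2_fs[OF W_fin(1)[OF small yf]] by simp
qed

lemma W_bounded:
  assumes small: "bU * dk k \<le> 1/2"
  shows "bounded_l2 (W k)"
proof -
  have "\<forall>x. l2 x \<longrightarrow> (\<forall>i. summable (\<lambda>j. W k i j * x j)) \<and> l2 (mv (W k) x)"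
    using W_bound[OF small] W_summable[OF small] by blast
  moreover have "\<forall>x. l2 x \<longrightarrow> l2norm (mv (W k) x) \<le> (2 * bU) * l2norm x"
    using W_bound[OF small] by simp
  ultimately show ?thesis unfolding bounded_l2_def by blast
qed

lemma W_opnorm:
  assumes small: "bU * dk k \<le> 1/2"
  shows "opnorm2 (W k) \<le> 2 * bU"
  by (rule opnorm_le) (use bU_pos W_bound[OF small] in auto)

lemma VW:
  assumes small: "bU * dk k \<le> 1/2" and x: "l2 x"
  shows "mv (Vk k) (mv (W k) x) = x"
proof (rule ext)
  fix i
  let ?R = "{..<RB k i}"
  have "mv (Vk k) (mv (W k) x) i = (\<Sum>l\<in>?R. Vk k i l * mv (W k) x l)" by (rule Vk_mv)
  also have "\<dots> = (\<Sum>l\<in>?R. \<Sum>j. Vk k i l * (W k l j * x j))"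
    unfolding mv_def by (rule sum.cong[OF refl], rule suminf_mult[symmetric], rule W_summable[OF small x])
  also have "\<dots> = (\<Sum>j. \<Sum>l\<in>?R. Vk k i l * (W k l j * x j))"
    by (rule suminf_sum[symmetric]) (rule summable_mult, rule W_summable[OF small x])
  also have "\<dots> = (\<Sum>j. (if j = i then x j else 0))"
  proof (rule arg_cong[where f=suminf], rule ext)
    fix j
    have "(\<Sum>l\<in>?R. Vk k i l * (W k l j * x j)) = (\<Sum>l\<in>?R. Vk k i l * Wc k j l) * x j"
      by (simp add: sum_distrib_right W_def mult.assoc)
    also have "(\<Sum>l\<in>?R. Vk k i l * Wc k j l) = mv (Vk k) (Wc k j) i" by (rule Vk_mv[symmetric])
    also have "\<dots> = ev j i" using Wc[OF small, of j] by simp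
    finally show "(\<Sum>l\<in>?R. Vk k i l * (W k l j * x j)) = (if j = i then x j else 0)"
      by (simp add: ev_def)
  qed
  also have "\<dots> = x i" using sums_single[of i x] by (simp add: sums_iff)
  finally show "mv (Vk k) (mv (W k) x) i = x i" .
qed

lemma WV:
  assumes small: "bU * dk k \<le> 1/2" and x: "l2 x"
  shows "mv (W k) (mv (Vk k) x) = x"
proof -
  define v where "v = mv (W k) (mv (Vk k) x)"
  have l2vx: "l2 (mv (Vk k) x)" using Vk_bound[OF x] by blast
  have l2v: "l2 v" unfolding v_def using W_bound[OF small l2vx] by blast
  have "mv (Vk k) v = mv (Vk k) x" unfolding v_def by (rule VW[OF small l2vx])
  moreover have "mv (Vk k) (\<lambda>i. v i - x i) = (\<lambda>i. mv (Vk k) v i - mv (Vk k) x i)"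
    by (rule mv_l2_diff) (rule Vk_summable)+
  ultimately have "mv (Vk k) (\<lambda>i. v i - x i) = (\<lambda>i. 0)" by simp
  hence "(\<lambda>i. v i - x i) = (\<lambda>i. 0)" by (rule Vk_inj[OF small l2_diff[OF l2v x]])
  hence "v = x" by (simp add: fun_eq_iff)
  thus ?thesis by (simp add: v_def)
qed

lemma Vk_inverse:
  assumes small: "bU * dk k \<le> 1/2"
  shows "is_bounded_inverse (Vk k) (W k)"
  unfolding is_bounded_inverse_def
  using Vk_bounded W_bounded[OF small] VW[OF small] WV[OF small] by blast

end

context setting begin

abbreviation "D0 \<equiv> blk_diag_part n U"

lemma D0_entry: "D0 i l = (if bx i = bx l then U i l else 0)"
proof -
  have "(\<exists>I. i \<in> blk n I \<and> l \<in> blk n I) \<longleftrightarrow> bx i = bx l" by (auto simp: blk_bx)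
  thus ?thesis by (simp add: blk_diag_part_def)
qed

definition h :: "nat \<Rightarrow> nat \<Rightarrow> ivec \<Rightarrow> ivec" where
  "h k J y = (\<lambda>i. y i - Z (n J) k (restr (n J) (mv M y)) i)"

definition Dek :: "nat \<Rightarrow> imat" where
  "Dek k i l = (if bx i = bx l then mv M (h k (bx l) (ev l)) i else 0)"

definition dD :: "nat \<Rightarrow> real" where "dD k = betaM * q ^ k * gam * bU"

lemma dD_nonneg: "0 \<le> dD k"
  using betaM_nonneg q_props gam_nonneg bU_pos by (simp add: dD_def)

lemma nJ_le: "n J \<le> n (Suc J)" by (rule n_Suc)

lemma ev_fs_lt: "l < N \<Longrightarrow> fs N (ev l)" by (simp add: fs_def ev_def)

lemma h_fs: "fs (n (Suc J)) y \<Longrightarrow> fs (n (Suc J)) (h k J y)"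
proof -
  assume y: "fs (n (Suc J)) y"
  have "fs (n J) (Z (n J) k (restr (n J) (mv M y)))" by (rule fs_Z[OF fs_restr])
  hence "fs (n (Suc J)) (Z (n J) k (restr (n J) (mv M y)))" using nJ_le by (rule fs_mono)
  thus ?thesis using y by (simp add: h_def fs_def)
qed

lemma basis_sum: "fs N y \<Longrightarrow> y = (\<lambda>i. \<Sum>l<N. y l * ev l i)"
proof (rule ext)
  fix i assume y: "fs N y"
  have "(\<Sum>l<N. y l * ev l i) = (\<Sum>l<N. if l = i then y i else 0)" by (rule sum.cong) (auto simp: ev_def)
  also have "\<dots> = (if i < N then y i else 0)" by simp
  also have "\<dots> = y i" using y unfolding fs_def by (cases "i < N") auto
  finally show "y i = (\<Sum>l<N. y l * ev l i)" by simp
qed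

lemma mv_basis: "fs N y \<Longrightarrow> mv T y = (\<lambda>i. \<Sum>l<N. y l * mv T (ev l) i)"
proof -
  assume y: "fs N y"
  have "mv T (\<lambda>i. \<Sum>l\<in>{..<N}. y l * ev l i) = (\<lambda>i. \<Sum>l\<in>{..<N}. mv T (\<lambda>i. y l * ev l i) i)"
    by (rule mv_sum[where N=N]) (auto simp: fs_def ev_def)
  also have "\<dots> = (\<lambda>i. \<Sum>l<N. y l * mv T (ev l) i)"
    using mv_scale_fs[OF ev_fs_lt] by simp
  finally have fin: "mv T (\<lambda>i. \<Sum>l\<in>{..<N}. y l * ev l i) = (\<lambda>i. \<Sum>l<N. y l * mv T (ev l) i)" .
  have e: "(\<lambda>i. \<Sum>l\<in>{..<N}. y l * ev l i) = y" by (rule sym, rule basis_sum[OF y])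
  show ?thesis using fin unfolding e .
qed

lemma h_lin:
  assumes y: "fs (n (Suc J)) y"
  shows "h k J y = (\<lambda>i. \<Sum>l<n (Suc J). y l * h k J (ev l) i)"
proof -
  let ?N = "n (Suc J)" and ?N' = "n J"
  have r: "restr ?N' (mv M y) = (\<lambda>i. \<Sum>l<?N. y l * restr ?N' (mv M (ev l)) i)"
    using mv_basis[OF y, of M] by (simp add: restr_def fun_eq_iff sum_distrib_left)
  have "Z ?N' k (restr ?N' (mv M y)) = Z ?N' k (\<lambda>i. \<Sum>l\<in>{..<?N}. (\<lambda>i. y l * restr ?N' (mv M (ev l)) i) i)"
    unfolding r by simp
  also have "\<dots> = (\<lambda>i. \<Sum>l\<in>{..<?N}. Z ?N' k (\<lambda>i. y l * restr ?N' (mv M (ev l)) i) i)"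
    by (rule lin_sum[OF lin_Z]) simp
  also have "\<dots> = (\<lambda>i. \<Sum>l<?N. y l * Z ?N' k (restr ?N' (mv M (ev l))) i)"
    by (simp add: lin_scale[OF lin_Z])
  finally have z: "Z ?N' k (restr ?N' (mv M y)) = (\<lambda>i. \<Sum>l<?N. y l * Z ?N' k (restr ?N' (mv M (ev l))) i)" .
  have bs: "(\<Sum>l<?N. y l * ev l i) = y i" for i using basis_sum[OF y] by metis
  show ?thesis
    unfolding h_def z by (simp add: fun_eq_iff right_diff_distrib sum_subtractf bs)
qed

lemma Mh_lin:
  assumes y: "fs (n (Suc J)) y"
  shows "mv M (h k J y) = (\<lambda>i. \<Sum>l<n (Suc J). y l * mv M (h k J (ev l)) i)"
proof -
  let ?N = "n (Suc J)"
  have hf: "fs ?N (h k J (ev l))" if "l \<in> {..<?N}" for l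
    using that by (intro h_fs ev_fs_lt) simp
  have "mv M (\<lambda>i. \<Sum>l\<in>{..<?N}. y l * h k J (ev l) i) = (\<lambda>i. \<Sum>l\<in>{..<?N}. mv M (\<lambda>i. y l * h k J (ev l) i) i)"
    by (rule mv_sum[where N="?N"]) (use hf in \<open>auto simp: fs_def\<close>)
  also have "\<dots> = (\<lambda>i. \<Sum>l<?N. y l * mv M (h k J (ev l)) i)"
    by (rule ext, rule sum.cong[OF refl]) (simp add: mv_scale_fs[OF hf])
  finally show ?thesis using h_lin[OF y, of k] by simp
qed

lemma Dek_blk:
  assumes y: "\<And>l. y l \<noteq> 0 \<Longrightarrow> bx l = J"
  shows "mv (Dek k) y = bp J (mv M (h k J y))"
proof (rule ext)
  fix i
  let ?N = "n (Suc J)"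
  have yf: "fs ?N y" by (rule inblk_fs[OF y])
  have "mv (Dek k) y i = (\<Sum>l<?N. Dek k i l * y l)" by (rule mv_fs[OF yf])
  also have "\<dots> = (\<Sum>l<?N. (if bx i = J then y l * mv M (h k J (ev l)) i else 0))"
  proof (rule sum.cong[OF refl])
    fix l show "Dek k i l * y l = (if bx i = J then y l * mv M (h k J (ev l)) i else 0)"
      using y[of l] by (cases "y l = 0") (auto simp: Dek_def)
  qed
  also have "\<dots> = bp J (mv M (h k J y)) i"
    using Mh_lin[OF yf, of k] by (simp add: bp_def)
  finally show "mv (Dek k) y i = bp J (mv M (h k J y)) i" .
qed

lemma D0_blk:
  assumes y: "\<And>l. y l \<noteq> 0 \<Longrightarrow> bx l = J"
  shows "mv D0 y = bp J (mv U y)"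
proof (rule ext)
  fix i
  let ?N = "n (Suc J)"
  have yf: "fs ?N y" by (rule inblk_fs[OF y])
  have "mv D0 y i = (\<Sum>l<?N. D0 i l * y l)" by (rule mv_fs[OF yf])
  also have "\<dots> = (\<Sum>l<?N. (if bx i = J then U i l * y l else 0))"
  proof (rule sum.cong[OF refl])
    fix l show "D0 i l * y l = (if bx i = J then U i l * y l else 0)"
      using y[of l] by (cases "y l = 0") (auto simp: D0_entry)
  qed
  also have "\<dots> = bp J (mv U y) i" by (simp add: bp_def mv_fs[OF yf])
  finally show "mv D0 y i = bp J (mv U y) i" .
qed

lemma D_key:
  assumes y: "\<And>l. y l \<noteq> 0 \<Longrightarrow> bx l = J"
  defines "u \<equiv> restr (n J) (mv U y)"
  defines "x' \<equiv> (\<lambda>i. - mv Uinv u i)"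
  defines "x \<equiv> (\<lambda>i. y i + x' i)"
  shows "fs (n J) x'" "fs (n (Suc J)) x"
    "\<And>i. i < n J \<Longrightarrow> mv M x i = 0"
    "\<And>i. bx i = J \<Longrightarrow> mv M x i = mv U y i"
    "\<And>i. bx i = J \<Longrightarrow> x i = y i"
    "h k J y = (\<lambda>i. x i - (R (n J) ^^ k) x' i)"
proof -
  let ?N = "n (Suc J)" and ?N' = "n J"
  have yf: "fs ?N y" by (rule inblk_fs[OF y])
  have uf: "fs ?N' u" by (simp add: u_def)
  have Uuf: "fs ?N' (mv Uinv u)" by (rule Uinv_fs[OF uf])
  show x'f: "fs ?N' x'" using Uuf by (simp add: x'_def fs_def)
  have x'f2: "fs ?N x'" using x'f nJ_le by (rule fs_mono)
  show xf: "fs ?N x" using yf x'f2 by (simp add: x_def fs_def)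
  have Ux': "mv U x' = (\<lambda>i. - u i)"
  proof -
    have "mv U x' = (\<lambda>i. (-1) * mv U (mv Uinv u) i)"
      unfolding x'_def using mv_scale_fs[OF Uuf, of U "-1"] by simp
    thus ?thesis using UUinv(1)[OF l2_fs[OF uf]] by simp
  qed
  have Ux: "mv U x = bp J (mv U y)"
  proof (rule ext)
    fix i
    have "mv U x i = mv U y i + mv U x' i" unfolding x_def using mv_add_fs[OF yf x'f2, of U] by simp
    also have "\<dots> = mv U y i - u i" using Ux' by simp
    also have "\<dots> = bp J (mv U y) i"
    proof (cases "i < ?N'")
      case True
      hence "bx i < J" using bx_lt by simp
      thus ?thesis using True by (simp add: u_def restr_def bp_def)
    next
      case False
      hence "J \<le> bx i" using bx_lt by simp
      moreover have "bx i \<noteq> J \<Longrightarrow> mv U y i = 0"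
      proof -
        assume "bx i \<noteq> J"
        hence "\<not> i < ?N" using bx_lt \<open>J \<le> bx i\<close> by simp
        thus ?thesis using U_fs[OF yf] by (simp add: fs_def)
      qed
      ultimately show ?thesis using False by (auto simp: u_def restr_def bp_def)
    qed
    finally show "mv U x i = bp J (mv U y) i" .
  qed
  have zsupp: "\<And>l. bp J (mv U y) l \<noteq> 0 \<Longrightarrow> bx l = J" by (rule bp_supp)
  have xUz: "x = mv Uinv (bp J (mv U y))" using UUinv(2)[OF l2_fs[OF xf]] Ux by simp
  have Mx: "mv M x i = bp J (mv U y) i" if "i < ?N" for i
    unfolding xUz by (rule MUinv(2)[OF zsupp that])
  show Mx0: "mv M x i = 0" if "i < ?N'" for i
  proof -
    have "bx i < J" using that bx_lt by simp
    moreover have "i < ?N" using that nJ_le[of J] by simp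
    ultimately show ?thesis using Mx by (simp add: bp_def)
  qed
  show "mv M x i = mv U y i" if "bx i = J" for i
  proof -
    have "i < ?N" using that bx_lt by simp
    thus ?thesis using Mx that by (simp add: bp_def)
  qed
  show "x i = y i" if "bx i = J" for i
  proof -
    have "\<not> i < ?N'" using that bx_lt by simp
    thus ?thesis using x'f by (simp add: x_def fs_def)
  qed
  have Ax': "A ?N' x' = (\<lambda>i. - restr ?N' (mv M y) i)"
  proof (rule ext)
    fix i
    have x'eq: "x' = (\<lambda>i. x i - y i)" by (simp add: x_def)
    have "A ?N' x' i = (if i < ?N' then mv M x' i else 0)" by (simp add: A_fs[OF x'f])
    also have "\<dots> = (if i < ?N' then mv M x i - mv M y i else 0)"
      unfolding x'eq using mv_diff_fs[OF xf yf, of M] by simp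
    also have "\<dots> = - restr ?N' (mv M y) i" using Mx0 by (simp add: restr_def)
    finally show "A ?N' x' i = - restr ?N' (mv M y) i" .
  qed
  have "Z ?N' k (restr ?N' (mv M y)) = Z ?N' k (\<lambda>i. - A ?N' x' i)"
    using Ax' by (simp add: fun_eq_iff)
  also have "\<dots> = (\<lambda>i. - Z ?N' k (A ?N' x') i)" by (rule lin_neg[OF lin_Z])
  also have "\<dots> = (\<lambda>i. - (x' i - (R ?N' ^^ k) x' i))" by (simp add: Z_A)
  finally show "h k J y = (\<lambda>i. x i - (R ?N' ^^ k) x' i)"
    by (simp add: h_def x_def fun_eq_iff)
qed

end

context setting begin

lemma L2_blk_le_l2: "l2 v \<Longrightarrow> L2_set v (blk n J) \<le> l2norm v"
proof -
  assume v: "l2 v"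
  have "L2_set v (blk n J) \<le> L2_set v {..<n (Suc J)}" by (rule L2_set_subset[OF _ blk_sub]) simp
  also have "\<dots> \<le> l2norm v" by (rule L2_set_le_l2norm[OF v])
  finally show ?thesis .
qed

lemma lessThan_split: "{..<n (Suc J)} = {..<n J} \<union> blk n J" "{..<n J} \<inter> blk n J = {}"
  using n_Suc[of J] by (auto simp: blk_def)

lemma Dblk:
  assumes y: "\<And>l. y l \<noteq> 0 \<Longrightarrow> bx l = J"
  shows "L2_set (\<lambda>i. mv D0 y i - mv (Dek k) y i) (blk n J) \<le> dD k * l2norm y"
    and "(\<Sum>i\<in>blk n J. mv (Dek k) y i * y i) \<ge> (cE - dD k) * (\<Sum>i\<in>blk n J. (y i)\<^sup>2)"
    and "L2_set (mv D0 y) (blk n J) \<le> bU * l2norm y"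
proof -
  let ?N = "n (Suc J)" and ?N' = "n J"
  define u where "u = restr (n J) (mv U y)"
  define x' where "x' = (\<lambda>i. - mv Uinv u i)"
  define x where "x = (\<lambda>i. y i + x' i)"
  have yf: "fs ?N y" by (rule inblk_fs[OF y])
  have l2y: "l2 y" by (rule l2_fs[OF yf])
  have ny0: "0 \<le> l2norm y" by (rule l2norm_nonneg[OF l2y])
  have x'f: "fs ?N' x'" unfolding x'_def u_def by (rule D_key(1)[OF y])
  have xf: "fs ?N x" unfolding x_def x'_def u_def by (rule D_key(2)[OF y])
  have Mx0: "mv M x i = 0" if "i < ?N'" for i
    unfolding x_def x'_def u_def by (rule D_key(3)[OF y that])
  have MxU: "mv M x i = mv U y i" if "bx i = J" for i
    unfolding x_def x'_def u_def by (rule D_key(4)[OF y that])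
  have xy: "x i = y i" if "bx i = J" for i
    unfolding x_def x'_def u_def by (rule D_key(5)[OF y that])
  have hy: "h k J y = (\<lambda>i. x i - (R ?N' ^^ k) x' i)"
    unfolding x_def x'_def u_def by (rule D_key(6)[OF y])
  define err where "err = mv M ((R ?N' ^^ k) x')"
  have Rf: "fs ?N' ((R ?N' ^^ k) x')" by (rule fs_Rp[OF x'f])
  have Rf2: "fs ?N ((R ?N' ^^ k) x')" using Rf nJ_le by (rule fs_mono)
  have diff: "mv D0 y i - mv (Dek k) y i = err i" if "bx i = J" for i
  proof -
    have "mv (Dek k) y i = mv M (h k J y) i" using Dek_blk[OF y, where k=k] that by (simp add: bp_def)
    also have "\<dots> = mv M x i - err i"
      unfolding hy err_def using mv_diff_fs[OF xf Rf2, of M] by simp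
    also have "\<dots> = mv U y i - err i" using MxU[OF that] by simp
    finally show ?thesis using D0_blk[OF y] that by (simp add: bp_def)
  qed
  have nu: "l2norm u \<le> bU * l2norm y"
  proof -
    have "l2norm u \<le> l2norm (mv U y)" unfolding u_def by (rule l2norm_restr) (use U_norm[OF l2y] in blast)
    also have "\<dots> \<le> bU * l2norm y" using U_norm[OF l2y] by blast
    finally show ?thesis .
  qed
  have nx': "l2norm x' \<le> gam * (bU * l2norm y)"
  proof -
    have uf: "fs ?N' u" by (simp add: u_def)
    have "l2norm x' = l2norm (mv Uinv u)" by (simp add: x'_def l2norm_def)
    also have "\<dots> \<le> gam * l2norm u" using Uinv_norm[OF l2_fs[OF uf]] by blast
    also have "\<dots> \<le> gam * (bU * l2norm y)" using nu gam_nonneg by (rule mult_left_mono)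
    finally show ?thesis .
  qed
  have nerr: "l2 err \<and> l2norm err \<le> dD k * l2norm y"
  proof -
    have "l2norm err \<le> betaM * l2norm ((R ?N' ^^ k) x')"
      unfolding err_def using M_norm[OF l2_fs[OF Rf]] by blast
    also have "\<dots> \<le> betaM * (q ^ k * l2norm x')"
      by (rule mult_left_mono[OF Rp_contr[OF x'f] betaM_nonneg])
    also have "\<dots> \<le> betaM * (q ^ k * (gam * (bU * l2norm y)))"
      using nx' q_props(1) betaM_nonneg by (intro mult_left_mono) auto
    also have "\<dots> = dD k * l2norm y" by (simp add: dD_def)
    finally show ?thesis unfolding err_def using M_norm[OF l2_fs[OF Rf]] by blast
  qed
  have "L2_set (\<lambda>i. mv D0 y i - mv (Dek k) y i) (blk n J) = L2_set err (blk n J)"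
    by (rule L2_set_cong) (simp_all add: diff blk_bx)
  also have "\<dots> \<le> l2norm err" using nerr L2_blk_le_l2 by blast
  also have "\<dots> \<le> dD k * l2norm y" using nerr by blast
  finally show "L2_set (\<lambda>i. mv D0 y i - mv (Dek k) y i) (blk n J) \<le> dD k * l2norm y" .
  have L2err: "L2_set err (blk n J) \<le> dD k * l2norm y"
    using nerr L2_blk_le_l2[of err J] by linarith
  have ny: "l2norm y = L2_set y (blk n J)"
  proof -
    have "l2norm y = L2_set y {..<?N}" by (rule l2norm_fs[OF yf])
    also have "\<dots> = L2_set y (blk n J)"
      by (rule L2_set_zero_out[OF _ blk_sub]) (use y blk_bx in auto)
    finally show ?thesis .
  qed
  define s where "s = (\<Sum>i\<in>blk n J. (y i)\<^sup>2)"
  have s_eq: "(l2norm y)\<^sup>2 = s" unfolding ny s_def by (rule L2_set_sq)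
  have main: "(\<Sum>i\<in>blk n J. mv M x i * y i) \<ge> cE * s"
  proof -
    have "(\<Sum>i\<in>blk n J. mv M x i * y i) = (\<Sum>i\<in>blk n J. mv M x i * x i)"
      by (rule sum.cong) (simp_all add: xy blk_bx)
    also have "\<dots> = (\<Sum>i<?N. mv M x i * x i)"
      unfolding lessThan_split(1) by (subst sum.union_disjoint) (simp_all add: lessThan_split(2) Mx0)
    also have "\<dots> = l2inner (mv M x) x" by (rule inner_fs[OF xf, symmetric])
    finally have e1: "(\<Sum>i\<in>blk n J. mv M x i * y i) = l2inner (mv M x) x" .
    have "cE * s \<le> cE * (l2norm x)\<^sup>2"
    proof -
      have "s = (\<Sum>i\<in>blk n J. (x i)\<^sup>2)" unfolding s_def by (rule sum.cong) (simp_all add: xy blk_bx)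
      also have "\<dots> \<le> (\<Sum>i<?N. (x i)\<^sup>2)" by (rule sum_mono2) (simp_all add: blk_sub)
      also have "\<dots> = (l2norm x)\<^sup>2" by (rule l2norm_fs_sq[OF xf, symmetric])
      finally show ?thesis using cE(1) by simp
    qed
    also have "\<dots> \<le> l2inner (mv M x) x" by (rule cE(2)[OF l2_fs[OF xf]])
    finally show ?thesis using e1 by simp
  qed
  have errterm: "\<bar>\<Sum>i\<in>blk n J. err i * y i\<bar> \<le> dD k * s"
  proof -
    have "\<bar>\<Sum>i\<in>blk n J. err i * y i\<bar> \<le> (\<Sum>i\<in>blk n J. \<bar>err i\<bar> * \<bar>y i\<bar>)"
      by (simp add: abs_mult[symmetric] sum_abs)
    also have "\<dots> \<le> L2_set err (blk n J) * L2_set y (blk n J)" by (rule L2_set_mult_ineq)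
    also have "\<dots> \<le> (dD k * l2norm y) * l2norm y"
      using L2err ny by (simp add: mult_right_mono)
    also have "\<dots> = dD k * s" using s_eq by (simp add: power2_eq_square)
    finally show ?thesis .
  qed
  have "(\<Sum>i\<in>blk n J. mv (Dek k) y i * y i) = (\<Sum>i\<in>blk n J. mv M x i * y i) - (\<Sum>i\<in>blk n J. err i * y i)"
  proof -
    have "(\<Sum>i\<in>blk n J. mv (Dek k) y i * y i) = (\<Sum>i\<in>blk n J. mv M x i * y i - err i * y i)"
    proof (rule sum.cong[OF refl])
      fix i assume "i \<in> blk n J"
      hence bi: "bx i = J" by (simp add: blk_bx)
      have e1: "mv (Dek k) y i = mv D0 y i - err i" using diff[OF bi] by simp
      have e2: "mv D0 y i = mv U y i" using D0_blk[OF y] bi by (simp add: bp_def)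
      have e: "mv (Dek k) y i = mv M x i - err i" using e1 e2 MxU[OF bi] by simp
      show "mv (Dek k) y i * y i = mv M x i * y i - err i * y i"
        unfolding e by (simp add: left_diff_distrib)
    qed
    thus ?thesis by (simp add: sum_subtractf)
  qed
  with main errterm show "(\<Sum>i\<in>blk n J. mv (Dek k) y i * y i) \<ge> (cE - dD k) * (\<Sum>i\<in>blk n J. (y i)\<^sup>2)"
    unfolding s_def[symmetric] by (simp add: left_diff_distrib)
  have "L2_set (mv D0 y) (blk n J) = L2_set (mv U y) (blk n J)"
    by (rule L2_set_cong) (simp_all add: D0_blk[OF y] bp_def blk_bx)
  also have "\<dots> \<le> l2norm (mv U y)" using U_norm[OF l2y] L2_blk_le_l2 by blast
  also have "\<dots> \<le> bU * l2norm y" using U_norm[OF l2y] by blast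
  finally show "L2_set (mv D0 y) (blk n J) \<le> bU * l2norm y" .
qed

end

context setting begin

lemma bd_bound:
  assumes Tblk: "\<And>i l. T i l \<noteq> 0 \<Longrightarrow> bx i = bx l" and C0: "0 \<le> C"
    and Tb: "\<And>J y. (\<And>l. y l \<noteq> 0 \<Longrightarrow> bx l = J) \<Longrightarrow> L2_set (mv T y) (blk n J) \<le> C * l2norm y"
    and x: "l2 x"
  shows "l2 (mv T x) \<and> l2norm (mv T x) \<le> C * l2norm x"
proof -
  have row0: "T i l = 0" if "\<not> l < n (Suc (bx i))" for i l
  proof (rule ccontr)
    assume "T i l \<noteq> 0"
    hence "bx l = bx i" using Tblk by simp
    thus False using that bx_lt by simp
  qed
  have rows: "summable (\<lambda>l. T i l * z l)" for i z
    by (rule suminf_fs(2)[of "n (Suc (bx i))"]) (simp add: row0)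
  show ?thesis
  proof (rule bound_from_restr[OF x rows])
    fix N
    define y where "y = restr N x"
    have yf: "fs (n N) y" using fs_restr[of N x] nK[of N] unfolding y_def by (rule fs_mono)
    have l2y: "l2 y" by (rule l2_fs[OF yf])
    have Tyf: "fs (n N) (mv T y)"
      unfolding fs_def
    proof (intro allI impI)
      fix i assume i: "n N \<le> i"
      have zz: "T i l * y l = 0" if "l < n N" for l
      proof (rule ccontr)
        assume "T i l * y l \<noteq> 0"
        hence "bx l = bx i" using Tblk[of i l] by auto
        moreover have "bx l < N" using that bx_lt by simp
        moreover have "\<not> bx i < N" using i bx_lt[of i N] by simp
        ultimately show False by simp
      qed
      have "mv T y i = (\<Sum>l<n N. T i l * y l)" by (rule mv_fs[OF yf])
      also have "\<dots> = 0" by (rule sum.neutral) (simp add: zz)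
      finally show "mv T y i = 0" .
    qed
    have bpf: "fs (n N) (bp I y)" for I using yf by (simp add: fs_def bp_def)
    have loc: "mv T y i = mv T (bp I y) i" if "bx i = I" for i I
    proof -
      have "mv T y i = (\<Sum>l<n N. T i l * y l)" by (rule mv_fs[OF yf])
      also have "\<dots> = (\<Sum>l<n N. T i l * bp I y l)"
      proof (rule sum.cong[OF refl])
        fix l show "T i l * y l = T i l * bp I y l"
          using Tblk[of i l] that by (cases "T i l = 0") (auto simp: bp_def)
      qed
      also have "\<dots> = mv T (bp I y) i" by (rule mv_fs[OF bpf, symmetric])
      finally show ?thesis .
    qed
    have "(l2norm (mv T y))\<^sup>2 = (\<Sum>I<N. (L2_set (mv T y) (blk n I))\<^sup>2)" by (rule l2norm_sq_blocks[OF Tyf])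
    also have "\<dots> \<le> (\<Sum>I<N. (C * L2_set y (blk n I))\<^sup>2)"
    proof (rule sum_mono)
      fix I assume "I \<in> {..<N}"
      have "L2_set (mv T y) (blk n I) = L2_set (mv T (bp I y)) (blk n I)"
        by (rule L2_set_cong) (simp_all add: loc blk_bx)
      also have "\<dots> \<le> C * l2norm (bp I y)" by (rule Tb) (rule bp_supp)
      finally show "(L2_set (mv T y) (blk n I))\<^sup>2 \<le> (C * L2_set y (blk n I))\<^sup>2"
        by (intro power_mono) (simp_all add: l2norm_bp)
    qed
    also have "\<dots> = C\<^sup>2 * (\<Sum>I<N. (L2_set y (blk n I))\<^sup>2)" by (simp add: power_mult_distrib sum_distrib_left)
    also have "\<dots> = (C * l2norm y)\<^sup>2" using l2norm_sq_blocks[OF yf] by (simp add: power_mult_distrib)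
    finally have "l2norm (mv T y) \<le> C * l2norm y"
      by (rule power2_le_imp_le) (use C0 l2norm_nonneg[OF l2y] in simp)
    also have "\<dots> \<le> C * l2norm x" unfolding y_def by (rule mult_left_mono[OF l2norm_restr[OF x] C0])
    finally show "l2 (mv T (restr N x)) \<and> l2norm (mv T (restr N x)) \<le> C * l2norm x"
      using l2_fs[OF Tyf] by (simp add: y_def)
  qed
qed

lemma Dek_blkdiag: "Dek k i l \<noteq> 0 \<Longrightarrow> bx i = bx l"
  by (simp add: Dek_def split: if_splits)

lemma DD_blkdiag: "mdiff D0 (Dek k) i l \<noteq> 0 \<Longrightarrow> bx i = bx l"
  by (auto simp: mdiff_def D0_entry Dek_def split: if_splits)

lemma Dek_bound:
  assumes x: "l2 x"
  shows "l2 (mv (Dek k) x) \<and> l2norm (mv (Dek k) x) \<le> (bU + dD k) * l2norm x"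
proof (rule bd_bound[OF Dek_blkdiag _ _ x])
  show "0 \<le> bU + dD k" using bU_pos dD_nonneg[of k] by simp
  fix J and y :: ivec assume y: "\<And>l. y l \<noteq> 0 \<Longrightarrow> bx l = J"
  have eq: "mv (Dek k) y = (\<lambda>i. mv D0 y i - (mv D0 y i - mv (Dek k) y i))" by simp
  have "L2_set (mv (Dek k) y) (blk n J) \<le> L2_set (mv D0 y) (blk n J) + L2_set (\<lambda>i. mv D0 y i - mv (Dek k) y i) (blk n J)"
    by (subst eq, rule L2_set_diff_le)
  also have "\<dots> \<le> bU * l2norm y + dD k * l2norm y" using Dblk(1)[where y=y and J=J and k=k, OF y] Dblk(3)[where y=y and J=J, OF y] by simp
  finally show "L2_set (mv (Dek k) y) (blk n J) \<le> (bU + dD k) * l2norm y" by (simp add: distrib_right)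
qed

lemma DD_fs: "fs N y \<Longrightarrow> mv (mdiff D0 (Dek k)) y = (\<lambda>i. mv D0 y i - mv (Dek k) y i)"
  by (rule mdiff_mv) (simp_all add: mv_fs_summable)

lemma DD_bound:
  assumes x: "l2 x"
  shows "l2 (mv (mdiff D0 (Dek k)) x) \<and> l2norm (mv (mdiff D0 (Dek k)) x) \<le> dD k * l2norm x"
proof (rule bd_bound[OF DD_blkdiag dD_nonneg _ x])
  fix J and y :: ivec assume y: "\<And>l. y l \<noteq> 0 \<Longrightarrow> bx l = J"
  show "L2_set (mv (mdiff D0 (Dek k)) y) (blk n J) \<le> dD k * l2norm y"
    using Dblk(1)[where y=y and J=J and k=k, OF y] DD_fs[OF inblk_fs[OF y], where k=k] by simp
qed

lemma rows_from_bound: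
  assumes "\<And>x. l2 x \<Longrightarrow> l2 (mv T x) \<and> l2norm (mv T x) \<le> C * l2norm x"
    and "\<And>x i. l2 x \<Longrightarrow> summable (\<lambda>j. T i j * x j)"
  shows "bounded_l2 T"
proof -
  have "\<forall>x. l2 x \<longrightarrow> (\<forall>i. summable (\<lambda>j. T i j * x j)) \<and> l2 (mv T x)" using assms by blast
  moreover have "\<forall>x. l2 x \<longrightarrow> l2norm (mv T x) \<le> C * l2norm x" using assms by blast
  ultimately show ?thesis unfolding bounded_l2_def by blast
qed

lemma Dek_row_fin: "Dek k i l \<noteq> 0 \<Longrightarrow> l < n (Suc (bx i))"
proof -
  assume "Dek k i l \<noteq> 0"
  hence "bx l = bx i" using Dek_blkdiag[of k i l] by simp
  hence "bx l < Suc (bx i)" by simp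
  thus ?thesis using bx_lt by simp
qed

lemma Dek_summable: "summable (\<lambda>l. Dek k i l * x l)"
  by (rule suminf_fs(2)[of "n (Suc (bx i))"]) (use Dek_row_fin in force)

lemma DD_summable: "summable (\<lambda>l. mdiff D0 (Dek k) i l * x l)"
proof (rule suminf_fs(2)[of "n (Suc (bx i))"])
  fix l assume "n (Suc (bx i)) \<le> l"
  hence "\<not> l < n (Suc (bx i))" by simp
  hence "\<not> bx l < Suc (bx i)" using bx_lt by simp
  hence "bx i \<noteq> bx l" by simp
  hence "mdiff D0 (Dek k) i l = 0" using DD_blkdiag[of k i l] by auto
  thus "mdiff D0 (Dek k) i l * x l = 0" by simp
qed

lemma Dek_bounded: "bounded_l2 (Dek k)"
  by (rule rows_from_bound[OF Dek_bound Dek_summable])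

lemma DD_bounded: "bounded_l2 (mdiff D0 (Dek k))"
  by (rule rows_from_bound[OF DD_bound DD_summable])

lemma DD_opnorm: "opnorm2 (mdiff D0 (Dek k)) \<le> dD k"
  by (rule opnorm_le) (use dD_nonneg DD_bound in auto)

lemma sums_blocks: fixes f :: "nat \<Rightarrow> real" shows "summable f \<Longrightarrow> (\<lambda>J. \<Sum>i\<in>blk n J. f i) sums suminf f"
proof -
  assume f: "summable f"
  have "(\<lambda>Q. \<Sum>i<n Q. f i) \<longlonglongrightarrow> suminf f"
    using LIMSEQ_subseq_LIMSEQ[OF summable_LIMSEQ[OF f] smono] by (simp add: comp_def)
  thus ?thesis unfolding sums_def by (simp add: sum_blocks)
qed

lemma Dek_loc: "bx i = J \<Longrightarrow> mv (Dek k) x i = mv (Dek k) (bp J x) i"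
proof -
  assume bi: "bx i = J"
  have z: "Dek k i l = 0" if "n (Suc (bx i)) \<le> l" for l using Dek_row_fin[of k i l] that by linarith
  have "mv (Dek k) x i = (\<Sum>l<n (Suc (bx i)). Dek k i l * x l)"
    unfolding mv_def by (rule suminf_fs(1)) (simp add: z)
  also have "\<dots> = (\<Sum>l<n (Suc (bx i)). Dek k i l * bp J x l)"
  proof (rule sum.cong[OF refl])
    fix l show "Dek k i l * x l = Dek k i l * bp J x l"
      using Dek_blkdiag[of k i l] bi by (cases "Dek k i l = 0") (auto simp: bp_def)
  qed
  also have "\<dots> = mv (Dek k) (bp J x) i"
    unfolding mv_def by (rule suminf_fs(1)[symmetric]) (simp add: z)
  finally show ?thesis .
qed

lemma Dek_elliptic:
  assumes small: "dD k < cE"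
  shows "elliptic (Dek k)"
  unfolding elliptic_def
proof (intro exI[of _ "cE - dD k"] conjI allI impI)
  show "0 < cE - dD k" using small by simp
  fix x assume x: "l2 x"
  define f where "f i = mv (Dek k) x i * x i" for i
  have l2D: "l2 (mv (Dek k) x)" using Dek_bound[OF x] by blast
  have fs: "summable f" unfolding f_def by (rule l2_mult_summable[OF l2D x])
  have s1: "(\<lambda>J. \<Sum>i\<in>blk n J. f i) sums l2inner (mv (Dek k) x) x"
    unfolding l2inner_def f_def[symmetric] using sums_blocks[OF fs] by simp
  have sx: "summable (\<lambda>i. (x i)\<^sup>2)" using x by (simp add: l2_def)
  have s2: "(\<lambda>J. (cE - dD k) * (\<Sum>i\<in>blk n J. (x i)\<^sup>2)) sums ((cE - dD k) * (\<Sum>i. (x i)\<^sup>2))"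
    by (rule sums_mult[OF sums_blocks[OF sx]])
  have le: "(cE - dD k) * (\<Sum>i\<in>blk n J. (x i)\<^sup>2) \<le> (\<Sum>i\<in>blk n J. f i)" for J
  proof -
    have "(\<Sum>i\<in>blk n J. f i) = (\<Sum>i\<in>blk n J. mv (Dek k) (bp J x) i * bp J x i)"
    proof (rule sum.cong[OF refl])
      fix i assume "i \<in> blk n J"
      hence bi: "bx i = J" by (simp add: blk_bx)
      have "mv (Dek k) x i = mv (Dek k) (bp J x) i" by (rule Dek_loc[OF bi])
      thus "f i = mv (Dek k) (bp J x) i * bp J x i" using bi by (simp add: f_def bp_def)
    qed
    also have "\<dots> \<ge> (cE - dD k) * (\<Sum>i\<in>blk n J. (bp J x i)\<^sup>2)"
      by (rule Dblk(2)[where y="bp J x" and J=J]) (rule bp_supp)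
    also have "(\<Sum>i\<in>blk n J. (bp J x i)\<^sup>2) = (\<Sum>i\<in>blk n J. (x i)\<^sup>2)"
      by (rule sum.cong) (simp_all add: bp_def blk_bx)
    finally show ?thesis by simp
  qed
  have "(cE - dD k) * (\<Sum>i. (x i)\<^sup>2) \<le> l2inner (mv (Dek k) x) x"
    by (rule sums_le[OF le s2 s1])
  thus "(cE - dD k) * (l2norm x)\<^sup>2 \<le> l2inner (mv (Dek k) x) x" using l2norm_sq[OF x] by simp
qed

lemma ev_mv: "mv T (ev l) j = T j l"
proof -
  have "fs (Suc l) (ev l)" by (simp add: fs_def ev_def)
  hence "mv T (ev l) j = (\<Sum>i<Suc l. T j i * ev l i)" by (rule mv_fs)
  also have "\<dots> = T j l" by (simp add: ev_def)
  finally show ?thesis .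
qed

lemma dpos: "0 \<le> d i j"
  using dtri[of i i j] d0[of i] dsym[of j i] by linarith

lemma Dek_inB: "Dek k i l \<noteq> 0 \<Longrightarrow> d i l \<le> real ((k + 1) * b0)"
proof -
  assume nz: "Dek k i l \<noteq> 0"
  let ?J = "bx l"
  have hf: "fs (n (Suc ?J)) (h k ?J (ev l))" by (rule h_fs[OF ev_fs])
  have "mv M (h k ?J (ev l)) i \<noteq> 0" using nz by (simp add: Dek_def split: if_splits)
  then obtain j where Mij: "M i j \<noteq> 0" and hj: "h k ?J (ev l) j \<noteq> 0" using M_supp[OF hf] by blast
  have dij: "d i j \<le> real b0" using M_entry[OF Mij] by simp
  have "d j l \<le> real (k * b0)"
  proof (cases "j = l")
    case True thus ?thesis using d0[of l] by simp
  next
    case False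
    hence Znz: "Z (n ?J) k (restr (n ?J) (mv M (ev l))) j \<noteq> 0" using hj by (simp add: h_def ev_def)
    have kpos: "0 < k"
    proof (rule ccontr)
      assume "\<not> 0 < k"
      hence "k = 0" by simp
      thus False using Znz by (simp add: Z_def)
    qed
    from Znz obtain j' where j': "restr (n ?J) (mv M (ev l)) j' \<noteq> 0" "d j j' \<le> real ((k - 1) * b0)"
      using Z_supp by blast
    have "M j' l \<noteq> 0" using j'(1) by (simp add: restr_def ev_mv split: if_splits)
    hence "d j' l \<le> real b0" using M_entry by simp
    hence "d j l \<le> real ((k - 1) * b0) + real b0" using dtri[of j l j'] j'(2) by simp
    also have "\<dots> \<le> real (k * b0)"
      using kpos by (cases k) (simp_all add: algebra_simps)
    finally show ?thesis .
  qed
  hence "d i l \<le> real b0 + real (k * b0)" using dtri[of i l j] dij by simp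
  also have "\<dots> = real ((k + 1) * b0)" by (simp add: algebra_simps)
  finally show ?thesis .
qed

end

lemma blk_banded_mono: "blk_banded n b M \<Longrightarrow> b \<le> b' \<Longrightarrow> blk_banded n b' M"
  unfolding blk_banded_def by force

lemma in_B_mono: "in_B d b M \<Longrightarrow> b \<le> b' \<Longrightarrow> in_B d b' M"
proof -
  assume a: "in_B d b M" "b \<le> b'"
  have "real b \<le> real b'" using a(2) by simp
  thus ?thesis using a(1) unfolding in_B_def by (meson le_less_trans)
qed

theorem lemma3p8:
  fixes M L U Uinv :: imat and n :: "nat \<Rightarrow> nat" and d :: "nat \<Rightarrow> nat \<Rightarrow> real" and b0 :: nat
  assumes "bounded_l2 M" and "elliptic M"
    and "block_structure n"
    and "blk_banded n b0 M"
    and "nat_metric d" and "in_B d b0 M"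
    and "\<forall>i j. M i j = mmul L U i j"
    and "blk_lower n L" and "blk_unit_diag n L" and "blk_upper n U"
    and "is_bounded_inverse U Uinv"
  shows "\<exists>K. \<forall>\<epsilon>>0. \<exists>(b::nat) Ueinv Ue De.
            blk_upper n Ueinv \<and> in_B d b Ueinv \<and> blk_banded n b Ueinv \<and>
            opnorm2 (mdiff Uinv Ueinv) \<le> \<epsilon> \<and>
            is_bounded_inverse Ueinv Ue \<and>
            opnorm2 Ue + opnorm2 Ueinv \<le> K \<and>
            blk_diagonal n De \<and> in_B d b De \<and> bounded_l2 De \<and> elliptic De \<and>
            opnorm2 (mdiff (blk_diag_part n U) De) \<le> \<epsilon>"
proof -
  let ?b1 = "Suc b0"
  interpret S: setting M L U Uinv n d ?b1
  proof
    show "blk_banded n ?b1 M" using assms(4) by (rule blk_banded_mono) simp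
    show "in_B d ?b1 M" using assms(6) by (rule in_B_mono) simp
  qed (use assms in auto)
  define K where "K = S.gam + 1 + 2 * S.bU"
  show ?thesis
  proof (intro exI[of _ K] allI impI)
    fix \<epsilon> :: real assume eps: "0 < \<epsilon>"
    define Cst where "Cst = S.gam * real ?b1 / (1 - S.r) + S.betaM * S.gam * S.bU + 1"
    define th where "th = min (min \<epsilon> 1) (min (1 / (2 * S.bU)) (S.cE / 2))"
    have r: "0 \<le> S.r" "S.r < 1" using S.r_props by auto
    have c1: "0 \<le> S.gam * real ?b1 / (1 - S.r)" using S.gam_nonneg r by simp
    have Cpos: "0 < Cst"
    proof -
      note c1
      moreover have "0 \<le> S.betaM * S.gam * S.bU" using S.betaM_nonneg S.gam_nonneg S.bU_pos by simp
      ultimately show ?thesis by (simp add: Cst_def)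
    qed
    have thpos: "0 < th" using eps S.bU_pos S.cE(1) by (simp add: th_def)
    obtain k where k: "S.r ^ k < th / Cst" using real_arch_pow_inv[of "th / Cst" S.r] thpos Cpos r by auto
    have rk0: "0 \<le> S.r ^ k" using r by simp
    have rkC: "S.r ^ k * Cst < th" using k Cpos by (simp add: pos_less_divide_eq)
    have dk_th: "S.dk k < th"
    proof -
      have "S.dk k = S.r ^ k * (S.gam * real ?b1 / (1 - S.r))" by (simp add: S.dk_def)
      also have "\<dots> \<le> S.r ^ k * Cst"
        using S.betaM_nonneg S.gam_nonneg S.bU_pos rk0 by (intro mult_left_mono) (auto simp: Cst_def)
      finally show ?thesis using rkC by simp
    qed
    have dD_th: "S.dD k < th"
    proof -
      have qk: "S.q ^ k \<le> S.r ^ k"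
      proof -
        have "S.q ^ k = S.r ^ k * S.r ^ k" using S.r_props(3) by (simp add: power2_eq_square power_mult_distrib)
        also have "\<dots> \<le> S.r ^ k * 1" using rk0 r by (intro mult_left_mono power_le_one) auto
        finally show ?thesis by simp
      qed
      have "S.dD k = S.q ^ k * (S.betaM * S.gam * S.bU)" by (simp add: S.dD_def)
      also have "\<dots> \<le> S.r ^ k * (S.betaM * S.gam * S.bU)"
        using S.betaM_nonneg S.gam_nonneg S.bU_pos qk by (intro mult_right_mono) auto
      also have "\<dots> \<le> S.r ^ k * Cst" using rk0 c1 by (intro mult_left_mono) (auto simp: Cst_def)
      finally show ?thesis using rkC by simp
    qed
    have dk_eps: "S.dk k \<le> \<epsilon>" and dk1: "S.dk k \<le> 1" using dk_th by (auto simp: th_def)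
    have small: "S.bU * S.dk k \<le> 1/2"
    proof -
      have "S.dk k \<le> 1 / (2 * S.bU)" using dk_th by (simp add: th_def)
      hence "S.bU * S.dk k \<le> S.bU * (1 / (2 * S.bU))" using S.bU_pos by (intro mult_left_mono) auto
      thus ?thesis using S.bU_pos by simp
    qed
    have dD_eps: "S.dD k \<le> \<epsilon>" and dD_c: "S.dD k < S.cE"
      using dD_th S.cE(1) by (auto simp: th_def)
    define b where "b = (k + 1) * ?b1"
    have kb: "(k - 1) * ?b1 \<le> b" unfolding b_def by (intro mult_right_mono) auto
    show "\<exists>(b::nat) Ueinv Ue De.
            blk_upper n Ueinv \<and> in_B d b Ueinv \<and> blk_banded n b Ueinv \<and>
            opnorm2 (mdiff Uinv Ueinv) \<le> \<epsilon> \<and>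
            is_bounded_inverse Ueinv Ue \<and>
            opnorm2 Ue + opnorm2 Ueinv \<le> K \<and>
            blk_diagonal n De \<and> in_B d b De \<and> bounded_l2 De \<and> elliptic De \<and>
            opnorm2 (mdiff (blk_diag_part n U) De) \<le> \<epsilon>"
    proof -
      have F1: "blk_upper n (S.Vk k)"
        unfolding blk_upper_def blk_zero_def
      proof (intro allI impI ballI)
        fix I J a c assume IJ: "J < I" and a: "a \<in> blk n I" and c: "c \<in> blk n J"
        show "S.Vk k a c = 0"
        proof (rule ccontr)
          assume "S.Vk k a c \<noteq> 0"
          hence "S.bx a \<le> S.bx c" using S.Vk_entry by blast
          thus False using a c IJ S.blk_bx by simp
        qed
      qed
      have F2: "in_B d b (S.Vk k)"
        unfolding in_B_def
      proof (intro allI impI)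
        fix a c assume h: "real b < d a c"
        show "S.Vk k a c = 0"
        proof (rule ccontr)
          assume "S.Vk k a c \<noteq> 0"
          hence "d a c \<le> real ((k - 1) * ?b1)" using S.Vk_entry by blast
          moreover have "real ((k - 1) * ?b1) \<le> real b" by (rule of_nat_mono[OF kb])
          ultimately show False using h by linarith
        qed
      qed
      have F3: "blk_banded n b (S.Vk k)"
        unfolding blk_banded_def blk_zero_def
      proof (intro allI impI ballI)
        fix I J a c assume IJ: "int b < \<bar>int I - int J\<bar>" and a: "a \<in> blk n I" and c: "c \<in> blk n J"
        show "S.Vk k a c = 0"
        proof (rule ccontr)
          assume "S.Vk k a c \<noteq> 0"
          hence "S.bx c \<le> S.bx a + (k - 1) * ?b1" "S.bx a \<le> S.bx c" using S.Vk_entry by blast+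
          hence "J \<le> I + (k - 1) * ?b1" "I \<le> J" using a c S.blk_bx by auto
          thus False using IJ kb by linarith
        qed
      qed
      have F4: "opnorm2 (mdiff Uinv (S.Vk k)) \<le> \<epsilon>" using S.E_opnorm[of k] dk_eps by simp
      have F5: "is_bounded_inverse (S.Vk k) (S.W k)" by (rule S.Vk_inverse[OF small])
      have F6: "opnorm2 (S.W k) + opnorm2 (S.Vk k) \<le> K"
        using S.W_opnorm[OF small] S.Vk_opnorm[of k] dk1 by (simp add: K_def)
      have F7: "blk_diagonal n (S.Dek k)"
        unfolding blk_diagonal_def blk_zero_def
      proof (intro allI impI ballI)
        fix I J a c assume IJ: "I \<noteq> J" and a: "a \<in> blk n I" and c: "c \<in> blk n J"
        show "S.Dek k a c = 0"
        proof (rule ccontr)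
          assume "S.Dek k a c \<noteq> 0"
          hence "S.bx a = S.bx c" by (rule S.Dek_blkdiag)
          thus False using a c IJ S.blk_bx by simp
        qed
      qed
      have F8: "in_B d b (S.Dek k)"
        unfolding in_B_def
      proof (intro allI impI)
        fix a c assume h: "real b < d a c"
        show "S.Dek k a c = 0"
        proof (rule ccontr)
          assume "S.Dek k a c \<noteq> 0"
          hence "d a c \<le> real ((k + 1) * ?b1)" by (rule S.Dek_inB)
          thus False using h by (simp add: b_def)
        qed
      qed
      have F9: "bounded_l2 (S.Dek k)" by (rule S.Dek_bounded)
      have F10: "elliptic (S.Dek k)" by (rule S.Dek_elliptic[OF dD_c])
      have F11: "opnorm2 (mdiff (blk_diag_part n U) (S.Dek k)) \<le> \<epsilon>" using S.DD_opnorm[of k] dD_eps by simp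
      show ?thesis
        apply (rule exI[of _ b], rule exI[of _ "S.Vk k"], rule exI[of _ "S.W k"], rule exI[of _ "S.Dek k"])
        using F1 F2 F3 F4 F5 F6 F7 F8 F9 F10 F11 by blast
    qed
  qed
qed


end
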